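(* Let $(X_0,d_0),(X_1,d_1),\dots,(X_q,d_q),(Y_1,D_1),\dots,(Y_Q,D_Q)$ be $C^\infty$ vector fields on a neighborhood $\Omega$ of $0$ in $\mathbb{R}^n$, each paired with a degree in $[0,\infty)^\nu\setminus\{0\}$, and let $W(t,x)$ be a $C^\infty$ map from a neighborhood of $(0,0)$ in $\mathbb{R}^N\times\mathbb{R}^n$ into $\mathbb{R}^n$ with $W(0,x)\equiv0$. Write $(\mathbf X,\mathbf d)=\{(X_l,d_l)\}_{l=1}^q$ and $(\mathbf Y,\mathbf D)=\{(Y_i,D_i)\}_{i=1}^Q$, and suppose $(\mathbf X,\mathbf d)\subseteq(\mathbf Y,\mathbf D)$. (i) If $(\mathbf Y,\mathbf D)$ controls $(X_0,d_0)$ and $(\mathbf X,\mathbf d)$ controls every element of $(\mathbf Y,\mathbf D)$, then $(\mathbf X,\mathbf d)$ controls $(X_0,d_0)$. (ii) If $(\mathbf Y,\mathbf D)$ controls $W$ and $(\mathbf X,\mathbf d)$ controls every element of $(\mathbf Y,\mathbf D)$, then $(\mathbf X,\mathbf d)$ controls $W$.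
   Context: Fix $e=\{e_1,\dots,e_N\}\subseteq[0,\infty)^\nu$; $\delta^d=\prod_\mu\delta_\mu^{d^\mu}$ ($0^0=1$), $\delta t=(\delta^{e_1}t_1,\dots,\delta^{e_N}t_N)$. For a finite list $(\mathbf Z,\mathbf D)=\{(Z_l,D_l)\}$ of vector fields on $\Omega$ with degrees: $B_{(\mathbf Z,\mathbf D)}(x,\delta)$ is the set of $y\in\Omega$ reachable from $x$ by an absolutely continuous $\gamma:[0,1]\to\Omega$ with $\gamma'=\sum_la_l\delta^{D_l}Z_l(\gamma)$ a.e., $\|\sum|a_l|^2\|_{L^\infty}<1$ (subspace topology); $\mathcal C(x,\delta,\Omega)$ means every such ODE from $x$ has an absolutely continuous solution $[0,1]\to\Omega$; $\vec\xi=(\xi,\dots,\xi)$; $(\delta\mathbf Z)^\beta$ composes $\delta^{D_{\beta_i}}Z_{\beta_i}$ along an ordered list $\beta$; $\|f\|_{C(V)}=\sup_V|f|$ with continuity. $(\mathbf Z,\mathbf D)$ controls $(X_0,d_0)$ if there are a neighborhood $U\subseteq\Omega$ of $0$ and $\xi_1>0$ with $\mathcal C(x,\vec{\xi_1},\Omega)$ for $x\in U$, and for all $x\in U,\delta\in[0,1]^\nu$: $\delta^{d_0}X_0=\sum_lc_l^{x,\delta}\delta^{D_l}Z_l$ on $B_{(\mathbf Z,\mathbf D)}(x,\xi_1\delta)$ with $\sup_{x,\delta}\sum_{|\beta|\le m}\|(\delta\mathbf Z)^\beta c_l^{x,\delta}\|_{C(B_{(\mathbf Z,\mathbf D)}(x,\xi_1\delta))}<\infty$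 for all $m$. $(\mathbf Z,\mathbf D)$ controls $W$ if there are $\rho'>0$, $\xi_1>0$, neighborhood $U$ with $\mathcal C(x,\vec{\xi_1},\Omega)$ for $x\in U$ and for all $x\in U$, $\delta\in[0,1]^\nu$: $W(\delta t,u)=\sum_lc_l^{x,\delta}(t,u)\delta^{D_l}Z_l(u)$ on $B^N(\rho')\times B_{(\mathbf Z,\mathbf D)}(x,\xi_1\delta)$ with $\sup_{x,\delta}\sum_{|\beta'|+|\beta|\le m}\|\partial_t^\beta(\delta\mathbf Z)^{\beta'}c_l^{x,\delta}\|_{C(B^N(\rho')\times B_{(\mathbf Z,\mathbf D)}(x,\xi_1\delta))}<\infty$ for all $m$. *)

theory Defs
  imports "HOL-Analysis.Analysis"
begin

coinductive smooth_on :: "'a::euclidean_space set \<Rightarrow> ('a \<Rightarrow> 'b::real_normed_vector) \<Rightarrow> bool"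
  for S where
  smooth_onI: "f differentiable_on S \<Longrightarrow> (\<forall>v. smooth_on S (\<lambda>x. frechet_derivative f (at x) v))
     \<Longrightarrow> smooth_on S f"

definition abs_cont_on :: "real \<Rightarrow> real \<Rightarrow> (real \<Rightarrow> 'b::real_normed_vector) \<Rightarrow> bool" where
  "abs_cont_on a b g \<longleftrightarrow>
     (\<forall>\<epsilon>>0. \<exists>d>0. \<forall>(k::nat) (u::nat \<Rightarrow> real) v.
        (\<forall>i<k. a \<le> u i \<and> u i \<le> v i \<and> v i \<le> b) \<and>
        (\<forall>i<k. \<forall>j<k. i \<noteq> j \<longrightarrow> v i \<le> u j \<or> v j \<le> u i) \<and>
        (\<Sum>i<k. v i - u i) < d
        \<longrightarrow> (\<Sum>i<k. norm (g (v i) - g (u i))) < \<epsilon>)"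

definition is_degree :: "real^'v \<Rightarrow> bool" where
  "is_degree d \<longleftrightarrow> (\<forall>\<mu>. 0 \<le> d $ \<mu>) \<and> d \<noteq> 0"

text \<open>\<delta>^d = prod_\<mu> \<delta>_\<mu>^(d^\<mu>), with the convention 0^0 = 1.\<close>
definition degpow :: "real^'v \<Rightarrow> real^'v \<Rightarrow> real" where
  "degpow \<delta> d = (\<Prod>\<mu>\<in>UNIV. if d $ \<mu> = 0 then 1 else (\<delta> $ \<mu>) powr (d $ \<mu>))"

definition unit_cube :: "(real^'v) set" where
  "unit_cube = {\<delta>. \<forall>\<mu>. 0 \<le> \<delta> $ \<mu> \<and> \<delta> $ \<mu> \<le> 1}"

definition tscale :: "('k \<Rightarrow> real^'v) \<Rightarrow> real^'v \<Rightarrow> real^'k \<Rightarrow> real^'k" where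
  "tscale e \<delta> t = (\<chi> j. degpow \<delta> (e j) * t $ j)"

definition sfield :: "real^'v \<Rightarrow> ((real^'n \<Rightarrow> real^'n) \<times> (real^'v)) \<Rightarrow> real^'n \<Rightarrow> real^'n" where
  "sfield \<delta> ZD = (\<lambda>y. degpow \<delta> (snd ZD) *\<^sub>R fst ZD y)"

definition adm_coeffs :: "nat \<Rightarrow> (nat \<Rightarrow> real \<Rightarrow> real) \<Rightarrow> bool" where
  "adm_coeffs L a \<longleftrightarrow> (\<forall>l<L. a l \<in> borel_measurable (lebesgue_on {0..1})) \<and>
     (\<exists>c<1. AE t in lebesgue_on {0..1}. (\<Sum>l<L. (a l t)\<^sup>2) \<le> c)"

definition ode_sol :: "(real^'n) set \<Rightarrow> ((real^'n \<Rightarrow> real^'n) \<times> (real^'v)) list \<Rightarrow> real^'v \<Rightarrow>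
    real^'n \<Rightarrow> (nat \<Rightarrow> real \<Rightarrow> real) \<Rightarrow> (real \<Rightarrow> real^'n) \<Rightarrow> bool" where
  "ode_sol \<Omega> Zs \<delta> x a \<gamma> \<longleftrightarrow> abs_cont_on 0 1 \<gamma> \<and> \<gamma> ` {0..1} \<subseteq> \<Omega> \<and> \<gamma> 0 = x \<and>
     (AE t in lebesgue_on {0..1}.
        (\<gamma> has_vector_derivative (\<Sum>l<length Zs. a l t *\<^sub>R sfield \<delta> (Zs ! l) (\<gamma> t))) (at t within {0..1}))"

definition zball :: "(real^'n) set \<Rightarrow> ((real^'n \<Rightarrow> real^'n) \<times> (real^'v)) list \<Rightarrow> real^'n \<Rightarrow> real^'v
    \<Rightarrow> (real^'n) set" where
  "zball \<Omega> Zs x \<delta> = {y \<in> \<Omega>. \<exists>a \<gamma>. adm_coeffs (length Zs) a \<and> ode_sol \<Omega> Zs \<delta> x a \<gamma> \<and> \<gamma> 1 = y}"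

definition ode_solvable :: "(real^'n) set \<Rightarrow> ((real^'n \<Rightarrow> real^'n) \<times> (real^'v)) list \<Rightarrow> real^'n
    \<Rightarrow> real^'v \<Rightarrow> bool" where
  "ode_solvable \<Omega> Zs x \<delta> \<longleftrightarrow> (\<forall>a. adm_coeffs (length Zs) a \<longrightarrow> (\<exists>\<gamma>. ode_sol \<Omega> Zs \<delta> x a \<gamma>))"

definition lie_deriv_on :: "(real^'n) set \<Rightarrow> (real^'n \<Rightarrow> real^'n) \<Rightarrow> (real^'n \<Rightarrow> real)
    \<Rightarrow> (real^'n \<Rightarrow> real) \<Rightarrow> bool" where
  "lie_deriv_on S V f g \<longleftrightarrow> (\<forall>y\<in>S. \<forall>\<gamma> \<epsilon>. 0 < \<epsilon> \<and> \<gamma> 0 = y \<and>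
      (\<forall>s\<in>{-\<epsilon><..<\<epsilon>}. (\<gamma> has_vector_derivative V (\<gamma> s)) (at s))
      \<longrightarrow> ((\<lambda>s. f (\<gamma> s)) has_real_derivative g y) (at 0))"

text \<open>(Z,D) controls (X0,d0).  G x \<delta> l \<beta> is (\<delta>Z)^\<beta> c_l^{x,\<delta>}.\<close>
definition controls_vf :: "(real^'n) set \<Rightarrow> ((real^'n \<Rightarrow> real^'n) \<times> (real^'v)) list
    \<Rightarrow> (real^'n \<Rightarrow> real^'n) \<Rightarrow> real^'v \<Rightarrow> bool" where
  "controls_vf \<Omega> Zs X0 d0 \<longleftrightarrow> (\<exists>U \<xi>. open U \<and> 0 \<in> U \<and> U \<subseteq> \<Omega> \<and> 0 < \<xi> \<and>
     (\<forall>x\<in>U. ode_solvable \<Omega> Zs x (vec \<xi>)) \<and>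
     (\<exists>(c :: real^'n \<Rightarrow> real^'v \<Rightarrow> nat \<Rightarrow> real^'n \<Rightarrow> real)
        (G :: real^'n \<Rightarrow> real^'v \<Rightarrow> nat \<Rightarrow> nat list \<Rightarrow> real^'n \<Rightarrow> real).
       (\<forall>x\<in>U. \<forall>\<delta>\<in>unit_cube.
          (\<forall>y\<in>zball \<Omega> Zs x (\<xi> *\<^sub>R \<delta>).
             degpow \<delta> d0 *\<^sub>R X0 y = (\<Sum>l<length Zs. c x \<delta> l y *\<^sub>R sfield \<delta> (Zs ! l) y)) \<and>
          (\<forall>l<length Zs.
             (\<forall>y\<in>zball \<Omega> Zs x (\<xi> *\<^sub>R \<delta>). G x \<delta> l [] y = c x \<delta> l y) \<and>
             (\<forall>\<beta> j. set \<beta> \<subseteq> {..<length Zs} \<and> j < length Zs \<longrightarrow>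
                lie_deriv_on (zball \<Omega> Zs x (\<xi> *\<^sub>R \<delta>)) (sfield \<delta> (Zs ! j))
                  (G x \<delta> l \<beta>) (G x \<delta> l (j # \<beta>))) \<and>
             (\<forall>\<beta>. set \<beta> \<subseteq> {..<length Zs} \<longrightarrow>
                continuous_on (zball \<Omega> Zs x (\<xi> *\<^sub>R \<delta>)) (G x \<delta> l \<beta>)))) \<and>
       (\<forall>m. \<exists>C. \<forall>x\<in>U. \<forall>\<delta>\<in>unit_cube. \<forall>l<length Zs. \<forall>\<beta>.
          set \<beta> \<subseteq> {..<length Zs} \<and> length \<beta> \<le> m \<longrightarrow>
          (\<forall>y\<in>zball \<Omega> Zs x (\<xi> *\<^sub>R \<delta>). \<bar>G x \<delta> l \<beta> y\<bar> \<le> C))))"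

text \<open>(Z,D) controls W.  H x \<delta> l \<alpha> \<beta> t u is (\<partial>_t^\<alpha> (\<delta>Z)^\<beta> c_l^{x,\<delta>})(t,u).\<close>
definition controls_W :: "(real^'n) set \<Rightarrow> ((real^'n \<Rightarrow> real^'n) \<times> (real^'v)) list
    \<Rightarrow> ('k \<Rightarrow> real^'v) \<Rightarrow> ((real^'k) \<times> (real^'n) \<Rightarrow> real^'n) \<Rightarrow> bool" where
  "controls_W \<Omega> Zs e W \<longleftrightarrow> (\<exists>\<rho> U \<xi>. 0 < \<rho> \<and> open U \<and> 0 \<in> U \<and> U \<subseteq> \<Omega> \<and> 0 < \<xi> \<and>
     (\<forall>x\<in>U. ode_solvable \<Omega> Zs x (vec \<xi>)) \<and>
     (\<exists>(c :: real^'n \<Rightarrow> real^'v \<Rightarrow> nat \<Rightarrow> real^'k \<Rightarrow> real^'n \<Rightarrow> real)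
        (H :: real^'n \<Rightarrow> real^'v \<Rightarrow> nat \<Rightarrow> ('k \<Rightarrow> nat) \<Rightarrow> nat list \<Rightarrow> real^'k \<Rightarrow> real^'n \<Rightarrow> real).
       (\<forall>x\<in>U. \<forall>\<delta>\<in>unit_cube.
          (\<forall>t\<in>ball 0 \<rho>. \<forall>u\<in>zball \<Omega> Zs x (\<xi> *\<^sub>R \<delta>).
             W (tscale e \<delta> t, u) = (\<Sum>l<length Zs. c x \<delta> l t u *\<^sub>R sfield \<delta> (Zs ! l) u)) \<and>
          (\<forall>l<length Zs.
             (\<forall>t\<in>ball 0 \<rho>. \<forall>u\<in>zball \<Omega> Zs x (\<xi> *\<^sub>R \<delta>). H x \<delta> l (\<lambda>_. 0) [] t u = c x \<delta> l t u) \<and>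
             (\<forall>\<beta> j. set \<beta> \<subseteq> {..<length Zs} \<and> j < length Zs \<longrightarrow> (\<forall>t\<in>ball 0 \<rho>.
                lie_deriv_on (zball \<Omega> Zs x (\<xi> *\<^sub>R \<delta>)) (sfield \<delta> (Zs ! j))
                  (H x \<delta> l (\<lambda>_. 0) \<beta> t) (H x \<delta> l (\<lambda>_. 0) (j # \<beta>) t))) \<and>
             (\<forall>\<alpha> \<beta> i. set \<beta> \<subseteq> {..<length Zs} \<longrightarrow>
                (\<forall>t\<in>ball 0 \<rho>. \<forall>u\<in>zball \<Omega> Zs x (\<xi> *\<^sub>R \<delta>).
                  ((\<lambda>s. H x \<delta> l \<alpha> \<beta> (t + s *\<^sub>R axis i 1) u) has_real_derivative
                     H x \<delta> l (\<alpha>(i := Suc (\<alpha> i))) \<beta> t u) (at 0))) \<and>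
             (\<forall>\<alpha> \<beta>. set \<beta> \<subseteq> {..<length Zs} \<longrightarrow>
                continuous_on (ball 0 \<rho> \<times> zball \<Omega> Zs x (\<xi> *\<^sub>R \<delta>))
                  (\<lambda>p. H x \<delta> l \<alpha> \<beta> (fst p) (snd p))))) \<and>
       (\<forall>m. \<exists>C. \<forall>x\<in>U. \<forall>\<delta>\<in>unit_cube. \<forall>l<length Zs. \<forall>\<alpha> \<beta>.
          set \<beta> \<subseteq> {..<length Zs} \<and> sum \<alpha> UNIV + length \<beta> \<le> m \<longrightarrow>
          (\<forall>t\<in>ball 0 \<rho>. \<forall>u\<in>zball \<Omega> Zs x (\<xi> *\<^sub>R \<delta>). \<bar>H x \<delta> l \<alpha> \<beta> t u\<bar> \<le> C))))"

end

theory Submission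
  imports Defs
begin

lemma degpow_scale:
  shows "degpow (r *\<^sub>R \<delta>) d = degpow (vec r) d * degpow \<delta> d"
  unfolding degpow_def prod.distrib[symmetric]
  by (rule prod.cong) (auto simp: powr_mult)

lemma degpow_vec_pos:
  assumes "0 < s" shows "degpow (vec s) d = s powr (\<Sum>\<mu>\<in>UNIV. d $ \<mu>)"
  unfolding degpow_def using assms by (simp add: powr_sum) (rule prod.cong, auto)

lemma degpow_nonneg: "0 \<le> degpow \<delta> d"
  unfolding degpow_def by (rule prod_nonneg) auto

lemma degree_sum_pos:
  assumes "is_degree d" shows "0 < (\<Sum>\<mu>\<in>UNIV. d $ \<mu>)"
proof -
  have nn: "\<forall>\<mu>. 0 \<le> d $ \<mu>" and nz: "d \<noteq> 0" using assms unfolding is_degree_def by auto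
  then obtain \<mu> where "d $ \<mu> \<noteq> 0" by (metis vec_eq_iff zero_index)
  then have "0 < d $ \<mu>" using nn by (metis order_le_less)
  moreover have "d $ \<mu> \<le> (\<Sum>\<mu>\<in>UNIV. d $ \<mu>)"
    by (rule member_le_sum) (use nn in auto)
  ultimately show ?thesis by simp
qed

lemma degpow_vec_le1:
  assumes "0 < s" "s \<le> 1" "is_degree d" shows "degpow (vec s) d \<le> 1"
  using assms degree_sum_pos[OF assms(3)] by (simp add: degpow_vec_pos powr_le1)

lemma degpow_vec_mono:
  assumes "0 < r" "r \<le> s" "is_degree d" shows "degpow (vec r) d \<le> degpow (vec s) d"
  using assms degree_sum_pos[OF assms(3)]
  by (simp add: degpow_vec_pos powr_mono2)

lemma sfield_scale: "sfield (r *\<^sub>R \<delta>) Z y = degpow (vec r) (snd Z) *\<^sub>R sfield \<delta> Z y"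
  unfolding sfield_def by (simp add: degpow_scale)

lemma ode_sol_transfer:
  assumes "\<And>t y. (\<Sum>l<length Xs. a l t *\<^sub>R sfield \<delta>1 (Xs ! l) y) = (\<Sum>i<length Ys. b i t *\<^sub>R sfield \<delta>2 (Ys ! i) y)"
  shows "ode_sol \<Omega> Xs \<delta>1 x a \<gamma> = ode_sol \<Omega> Ys \<delta>2 x b \<gamma>"
  unfolding ode_sol_def assms ..

lemma sum_sq_card:
  fixes f :: "nat \<Rightarrow> real"
  shows "(\<Sum>l\<in>F. f l)\<^sup>2 \<le> real (card F) * (\<Sum>l\<in>F. (f l)\<^sup>2)"
  using Cauchy_Schwarz_ineq_sum[of "\<lambda>l. f l" "\<lambda>_. 1" F] by (simp add: mult.commute)

lemma zball_transfer:
  fixes \<sigma> :: "nat \<Rightarrow> nat"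
  assumes \<sigma>: "\<forall>l<length Xs. \<sigma> l < length Ys \<and> Ys ! \<sigma> l = Xs ! l"
    and good: "\<forall>l<length Xs. real (length Xs) * (degpow (vec r) (snd (Xs!l)))\<^sup>2 \<le> 1"
  shows "zball \<Omega> Xs x (r *\<^sub>R \<delta>) \<subseteq> zball \<Omega> Ys x \<delta>"
proof
  fix y assume "y \<in> zball \<Omega> Xs x (r *\<^sub>R \<delta>)"
  then obtain a \<gamma> where yO: "y \<in> \<Omega>" and adm: "adm_coeffs (length Xs) a"
    and sol: "ode_sol \<Omega> Xs (r *\<^sub>R \<delta>) x a \<gamma>" and g1: "\<gamma> 1 = y"
    unfolding zball_def by blast
  define L where "L = length Xs"
  define \<kappa> where "\<kappa> l = degpow (vec r) (snd (Xs!l))" for l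
  define F where "F i = {l. l \<in> {..<L} \<and> \<sigma> l = i}" for i
  define b where "b i t = (\<Sum>l\<in>F i. a l t * \<kappa> l)" for i t
  have grp: "(\<Sum>i<length Ys. (\<Sum>l\<in>F i. h l)) = (\<Sum>l<L. h l)" for h :: "nat \<Rightarrow> 'z::comm_monoid_add"
    unfolding F_def by (rule sum.group) (use \<sigma> L_def in auto)
  have eq: "(\<Sum>l<length Xs. a l t *\<^sub>R sfield (r *\<^sub>R \<delta>) (Xs ! l) z) =
        (\<Sum>i<length Ys. b i t *\<^sub>R sfield \<delta> (Ys ! i) z)" for t z
  proof -
    have "(\<Sum>i<length Ys. b i t *\<^sub>R sfield \<delta> (Ys ! i) z) =
        (\<Sum>i<length Ys. (\<Sum>l\<in>F i. (a l t * \<kappa> l) *\<^sub>R sfield \<delta> (Xs ! l) z))"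
      unfolding b_def scaleR_sum_left
      by (rule sum.cong, simp, rule sum.cong) (use \<sigma> in \<open>auto simp: F_def L_def\<close>)
    also have "\<dots> = (\<Sum>l<L. (a l t * \<kappa> l) *\<^sub>R sfield \<delta> (Xs ! l) z)" by (rule grp)
    also have "\<dots> = (\<Sum>l<length Xs. a l t *\<^sub>R sfield (r *\<^sub>R \<delta>) (Xs ! l) z)"
      unfolding L_def \<kappa>_def sfield_scale by simp
    finally show ?thesis by simp
  qed
  obtain c where c1: "c < 1" and ae: "AE t in lebesgue_on {0..1}. (\<Sum>l<length Xs. (a l t)\<^sup>2) \<le> c"
    using adm unfolding adm_coeffs_def by blast
  have meas: "\<forall>l<length Xs. a l \<in> borel_measurable (lebesgue_on {0..1})"
    using adm unfolding adm_coeffs_def by blast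
  have bm: "b i \<in> borel_measurable (lebesgue_on {0..1})" for i
    unfolding b_def by (rule borel_measurable_sum, rule borel_measurable_times) (use meas in \<open>auto simp: F_def L_def\<close>)
  have pt: "(\<Sum>i<length Ys. (b i t)\<^sup>2) \<le> (\<Sum>l<length Xs. (a l t)\<^sup>2)" for t
  proof -
    have "(b i t)\<^sup>2 \<le> real L * (\<Sum>l\<in>F i. (a l t * \<kappa> l)\<^sup>2)" for i
    proof -
      have "(b i t)\<^sup>2 \<le> real (card (F i)) * (\<Sum>l\<in>F i. (a l t * \<kappa> l)\<^sup>2)"
        unfolding b_def by (rule sum_sq_card)
      also have "\<dots> \<le> real L * (\<Sum>l\<in>F i. (a l t * \<kappa> l)\<^sup>2)"
      proof (rule mult_right_mono)
        have "card (F i) \<le> card {..<L}" by (rule card_mono) (auto simp: F_def)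
        then show "real (card (F i)) \<le> real L" by simp
      qed (simp add: sum_nonneg)
      finally show ?thesis .
    qed
    then have "(\<Sum>i<length Ys. (b i t)\<^sup>2) \<le> (\<Sum>i<length Ys. real L * (\<Sum>l\<in>F i. (a l t * \<kappa> l)\<^sup>2))"
      by (rule sum_mono)
    also have "\<dots> = (\<Sum>l<L. real L * (a l t * \<kappa> l)\<^sup>2)"
      unfolding sum_distrib_left[symmetric] grp ..
    also have "\<dots> \<le> (\<Sum>l<L. (a l t)\<^sup>2)"
    proof (rule sum_mono)
      fix l assume "l \<in> {..<L}"
      then have "real L * (\<kappa> l)\<^sup>2 \<le> 1" using good by (simp add: \<kappa>_def L_def)
      then have "(a l t)\<^sup>2 * (real L * (\<kappa> l)\<^sup>2) \<le> (a l t)\<^sup>2 * 1"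
        by (rule mult_left_mono) simp
      then show "real L * (a l t * \<kappa> l)\<^sup>2 \<le> (a l t)\<^sup>2" by (simp add: power_mult_distrib algebra_simps)
    qed
    finally show ?thesis by (simp add: L_def)
  qed
  have "adm_coeffs (length Ys) b"
    unfolding adm_coeffs_def
    using bm c1 by (auto intro!: exI[of _ c] eventually_mono[OF ae] order_trans[OF pt])
  moreover have "ode_sol \<Omega> Ys \<delta> x b \<gamma>"
    using sol ode_sol_transfer[OF eq] by simp
  ultimately show "y \<in> zball \<Omega> Ys x \<delta>" unfolding zball_def using yO g1 by blast
qed

lemma ode_solvable_scale:
  assumes sol: "ode_solvable \<Omega> Zs x \<delta>"
    and le: "\<forall>l<length Zs. degpow (vec r) (snd (Zs!l)) \<le> 1"
  shows "ode_solvable \<Omega> Zs x (r *\<^sub>R \<delta>)"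
  unfolding ode_solvable_def
proof (intro allI impI)
  fix a assume adm: "adm_coeffs (length Zs) a"
  define \<kappa> where "\<kappa> l = degpow (vec r) (snd (Zs!l))" for l
  define a' where "a' l t = a l t * \<kappa> l" for l t
  obtain c where c1: "c < 1" and ae: "AE t in lebesgue_on {0..1}. (\<Sum>l<length Zs. (a l t)\<^sup>2) \<le> c"
    using adm unfolding adm_coeffs_def by blast
  have meas: "\<forall>l<length Zs. a l \<in> borel_measurable (lebesgue_on {0..1})"
    using adm unfolding adm_coeffs_def by blast
  have pt: "(\<Sum>l<length Zs. (a' l t)\<^sup>2) \<le> (\<Sum>l<length Zs. (a l t)\<^sup>2)" for t
  proof (rule sum_mono)
    fix l assume "l \<in> {..<length Zs}"
    then have k: "0 \<le> \<kappa> l" "\<kappa> l \<le> 1" using le by (auto simp: \<kappa>_def degpow_nonneg)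
    then have "(\<kappa> l)\<^sup>2 \<le> 1" by (simp add: power_le_one)
    then have "(a l t)\<^sup>2 * (\<kappa> l)\<^sup>2 \<le> (a l t)\<^sup>2 * 1" by (rule mult_left_mono) simp
    then show "(a' l t)\<^sup>2 \<le> (a l t)\<^sup>2" by (simp add: a'_def power_mult_distrib)
  qed
  have "adm_coeffs (length Zs) a'"
    unfolding adm_coeffs_def a'_def
    using meas c1 by (auto intro!: exI[of _ c] eventually_mono[OF ae] order_trans[OF pt[unfolded a'_def]])
  then obtain \<gamma> where g: "ode_sol \<Omega> Zs \<delta> x a' \<gamma>" using sol unfolding ode_solvable_def by blast
  have eq: "(\<Sum>l<length Zs. a' l t *\<^sub>R sfield \<delta> (Zs ! l) z) =
        (\<Sum>l<length Zs. a l t *\<^sub>R sfield (r *\<^sub>R \<delta>) (Zs ! l) z)" for t z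
    unfolding a'_def \<kappa>_def sfield_scale by simp
  show "\<exists>\<gamma>. ode_sol \<Omega> Zs (r *\<^sub>R \<delta>) x a \<gamma>"
  proof -
    have "ode_sol \<Omega> Zs \<delta> x a' \<gamma> = ode_sol \<Omega> Zs (r *\<^sub>R \<delta>) x a \<gamma>"
      by (rule ode_sol_transfer) (rule eq)
    then show ?thesis using g by blast
  qed
qed

fun splits :: "nat list \<Rightarrow> (nat list \<times> nat list) list" where
  "splits [] = [([], [])]"
| "splits (j # \<beta>) = map (\<lambda>ab. (j # fst ab, snd ab)) (splits \<beta>) @ map (\<lambda>ab. (fst ab, j # snd ab)) (splits \<beta>)"

lemma splits_props: "ab \<in> set (splits \<beta>) \<Longrightarrow> set (fst ab) \<subseteq> set \<beta> \<and> set (snd ab) \<subseteq> set \<beta> \<and>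
   length (fst ab) \<le> length \<beta> \<and> length (snd ab) \<le> length \<beta>"
  by (induction \<beta> arbitrary: ab) fastforce+

lemma length_splits: "length (splits \<beta>) = 2 ^ length \<beta>"
  by (induction \<beta>) auto

definition pG :: "(nat list \<Rightarrow> 'p \<Rightarrow> real) \<Rightarrow> (nat list \<Rightarrow> 'p \<Rightarrow> real) \<Rightarrow> nat list \<Rightarrow> 'p \<Rightarrow> real" where
  "pG F1 F2 \<beta> y = sum_list (map (\<lambda>ab. F1 (fst ab) y * F2 (snd ab) y) (splits \<beta>))"

lemma pG_Nil: "pG F1 F2 [] y = F1 [] y * F2 [] y"
  by (simp add: pG_def)

lemma pG_Cons: "pG F1 F2 (j # \<beta>) y =
   sum_list (map (\<lambda>ab. F1 (j # fst ab) y * F2 (snd ab) y + F1 (fst ab) y * F2 (j # snd ab) y) (splits \<beta>))"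
  by (simp add: pG_def o_def sum_list_addf)

lemma lie_mono: "S \<subseteq> T \<Longrightarrow> lie_deriv_on T V f g \<Longrightarrow> lie_deriv_on S V f g"
  unfolding lie_deriv_on_def by blast

lemma lie_add: "lie_deriv_on S V f g \<Longrightarrow> lie_deriv_on S V f' g' \<Longrightarrow>
   lie_deriv_on S V (\<lambda>y. f y + f' y) (\<lambda>y. g y + g' y)"
  unfolding lie_deriv_on_def
proof (intro ballI allI impI)
  fix y \<gamma> \<epsilon>
  assume h: "\<forall>y\<in>S. \<forall>\<gamma> \<epsilon>. 0 < \<epsilon> \<and> \<gamma> 0 = y \<and> (\<forall>s\<in>{- \<epsilon><..<\<epsilon>}. (\<gamma> has_vector_derivative V (\<gamma> s)) (at s)) \<longrightarrow>
        ((\<lambda>s. f (\<gamma> s)) has_real_derivative g y) (at 0)"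
    and h': "\<forall>y\<in>S. \<forall>\<gamma> \<epsilon>. 0 < \<epsilon> \<and> \<gamma> 0 = y \<and> (\<forall>s\<in>{- \<epsilon><..<\<epsilon>}. (\<gamma> has_vector_derivative V (\<gamma> s)) (at s)) \<longrightarrow>
        ((\<lambda>s. f' (\<gamma> s)) has_real_derivative g' y) (at 0)"
    and y: "y \<in> S" and c: "0 < \<epsilon> \<and> \<gamma> 0 = y \<and> (\<forall>s\<in>{- \<epsilon><..<\<epsilon>}. (\<gamma> has_vector_derivative V (\<gamma> s)) (at s))"
  have d1: "((\<lambda>s. f (\<gamma> s)) has_real_derivative g y) (at 0)" using h y c by blast
  have d2: "((\<lambda>s. f' (\<gamma> s)) has_real_derivative g' y) (at 0)" using h' y c by blast
  show "((\<lambda>s. f (\<gamma> s) + f' (\<gamma> s)) has_real_derivative g y + g' y) (at 0)"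
    using DERIV_add[OF d1 d2] .
qed

lemma lie_mult: "lie_deriv_on S V f g \<Longrightarrow> lie_deriv_on S V f' g' \<Longrightarrow>
   lie_deriv_on S V (\<lambda>y. f y * f' y) (\<lambda>y. g y * f' y + f y * g' y)"
  unfolding lie_deriv_on_def
proof (intro ballI allI impI)
  fix y \<gamma> \<epsilon>
  assume h: "\<forall>y\<in>S. \<forall>\<gamma> \<epsilon>. 0 < \<epsilon> \<and> \<gamma> 0 = y \<and> (\<forall>s\<in>{- \<epsilon><..<\<epsilon>}. (\<gamma> has_vector_derivative V (\<gamma> s)) (at s)) \<longrightarrow>
        ((\<lambda>s. f (\<gamma> s)) has_real_derivative g y) (at 0)"
    and h': "\<forall>y\<in>S. \<forall>\<gamma> \<epsilon>. 0 < \<epsilon> \<and> \<gamma> 0 = y \<and> (\<forall>s\<in>{- \<epsilon><..<\<epsilon>}. (\<gamma> has_vector_derivative V (\<gamma> s)) (at s)) \<longrightarrow>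
        ((\<lambda>s. f' (\<gamma> s)) has_real_derivative g' y) (at 0)"
    and y: "y \<in> S" and c: "0 < \<epsilon> \<and> \<gamma> 0 = y \<and> (\<forall>s\<in>{- \<epsilon><..<\<epsilon>}. (\<gamma> has_vector_derivative V (\<gamma> s)) (at s))"
  have d1: "((\<lambda>s. f (\<gamma> s)) has_real_derivative g y) (at 0)" using h y c by blast
  have d2: "((\<lambda>s. f' (\<gamma> s)) has_real_derivative g' y) (at 0)" using h' y c by blast
  show "((\<lambda>s. f (\<gamma> s) * f' (\<gamma> s)) has_real_derivative g y * f' y + f y * g' y) (at 0)"
    using DERIV_mult[OF d1 d2] c by (simp add: algebra_simps)
qed

lemma lie_zero: "lie_deriv_on S V (\<lambda>_. 0) (\<lambda>_. 0)"
  unfolding lie_deriv_on_def by auto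

lemma lie_sum_list: "(\<forall>x\<in>set xs. lie_deriv_on S V (f x) (g x)) \<Longrightarrow>
   lie_deriv_on S V (\<lambda>y. sum_list (map (\<lambda>x. f x y) xs)) (\<lambda>y. sum_list (map (\<lambda>x. g x y) xs))"
  by (induction xs) (auto intro: lie_zero lie_add)

lemma lie_sum: "finite I \<Longrightarrow> (\<forall>x\<in>I. lie_deriv_on S V (f x) (g x)) \<Longrightarrow>
   lie_deriv_on S V (\<lambda>y. \<Sum>x\<in>I. f x y) (\<lambda>y. \<Sum>x\<in>I. g x y)"
  by (induction I rule: finite_induct) (auto intro: lie_zero lie_add)

lemma lie_pG:
  assumes "\<forall>ab\<in>set (splits \<beta>). lie_deriv_on S V (F1 (fst ab)) (F1 (j # fst ab)) \<and>
                                 lie_deriv_on S V (F2 (snd ab)) (F2 (j # snd ab))"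
  shows "lie_deriv_on S V (pG F1 F2 \<beta>) (pG F1 F2 (j # \<beta>))"
proof -
  have "lie_deriv_on S V (\<lambda>y. sum_list (map (\<lambda>ab. F1 (fst ab) y * F2 (snd ab) y) (splits \<beta>)))
     (\<lambda>y. sum_list (map (\<lambda>ab. F1 (j # fst ab) y * F2 (snd ab) y + F1 (fst ab) y * F2 (j # snd ab) y) (splits \<beta>)))"
    by (rule lie_sum_list) (use assms in \<open>auto intro: lie_mult\<close>)
  moreover have "pG F1 F2 (j # \<beta>) = (\<lambda>y. sum_list (map (\<lambda>ab. F1 (j # fst ab) y * F2 (snd ab) y + F1 (fst ab) y * F2 (j # snd ab) y) (splits \<beta>)))"
    by (rule ext) (rule pG_Cons)
  moreover have "pG F1 F2 \<beta> = (\<lambda>y. sum_list (map (\<lambda>ab. F1 (fst ab) y * F2 (snd ab) y) (splits \<beta>)))"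
    by (rule ext) (simp add: pG_def)
  ultimately show ?thesis by simp
qed

lemma cont_sum_list: "(\<forall>x\<in>set xs. continuous_on S (f x :: _ \<Rightarrow> real)) \<Longrightarrow>
   continuous_on S (\<lambda>y. sum_list (map (\<lambda>x. f x y) xs))"
proof (induction xs)
  case (Cons a xs)
  have c1: "continuous_on S (f a)" using Cons.prems by simp
  have c2: "continuous_on S (\<lambda>y. sum_list (map (\<lambda>x. f x y) xs))" using Cons by simp
  have "continuous_on S (\<lambda>y. f a y + sum_list (map (\<lambda>x. f x y) xs))"
    using continuous_on_add[OF c1 c2] .
  then show ?case by simp
qed simp

lemma cont_pG:
  assumes "\<forall>ab\<in>set (splits \<beta>). continuous_on S (F1 (fst ab)) \<and> continuous_on S (F2 (snd ab))"
  shows "continuous_on S (pG F1 F2 \<beta>)"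
proof -
  have "continuous_on S (\<lambda>y. sum_list (map (\<lambda>ab. F1 (fst ab) y * F2 (snd ab) y) (splits \<beta>)))"
    by (rule cont_sum_list) (use assms in \<open>auto intro: continuous_on_mult\<close>)
  then show ?thesis by (simp add: pG_def[abs_def])
qed

lemma abs_sum_list_le: "(\<forall>x\<in>set xs. \<bar>f x\<bar> \<le> (C::real)) \<Longrightarrow> \<bar>sum_list (map f xs)\<bar> \<le> real (length xs) * C"
proof (induction xs)
  case (Cons a xs)
  then have "\<bar>f a + sum_list (map f xs)\<bar> \<le> C + real (length xs) * C"
    by (smt (verit) list.set_intros)
  then show ?case by (simp add: algebra_simps)
qed simp

lemma bound_pG:
  assumes "\<forall>ab\<in>set (splits \<beta>). \<bar>F1 (fst ab) y\<bar> \<le> C1 \<and> \<bar>F2 (snd ab) y\<bar> \<le> C2"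
  shows "\<bar>pG F1 F2 \<beta> y\<bar> \<le> 2 ^ length \<beta> * (C1 * C2)"
proof -
  have "\<bar>pG F1 F2 \<beta> y\<bar> \<le> real (length (splits \<beta>)) * (C1 * C2)"
    unfolding pG_def
  proof (rule abs_sum_list_le, intro ballI)
    fix ab assume "ab \<in> set (splits \<beta>)"
    then have a: "\<bar>F1 (fst ab) y\<bar> \<le> C1" and b: "\<bar>F2 (snd ab) y\<bar> \<le> C2" using assms by auto
    have "\<bar>F1 (fst ab) y * F2 (snd ab) y\<bar> = \<bar>F1 (fst ab) y\<bar> * \<bar>F2 (snd ab) y\<bar>" by (simp add: abs_mult)
    also have "\<dots> \<le> C1 * C2" by (rule mult_mono) (use a b in auto)
    finally show "\<bar>F1 (fst ab) y * F2 (snd ab) y\<bar> \<le> C1 * C2" .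
  qed
  then show ?thesis by (simp add: length_splits)
qed

lemma deriv_sum_list: "(\<forall>x\<in>set xs. ((\<lambda>s. f x s) has_real_derivative f' x) (at 0)) \<Longrightarrow>
   ((\<lambda>s. sum_list (map (\<lambda>x. f x s) xs)) has_real_derivative sum_list (map f' xs)) (at 0)"
  by (induction xs) (auto intro!: derivative_intros)

lemma deriv_pG:
  assumes "\<forall>ab\<in>set (splits \<beta>). ((\<lambda>s. P (fst ab) s) has_real_derivative P' (fst ab)) (at 0)"
  shows "((\<lambda>s. pG (\<lambda>a _. P a s) F2 \<beta> y) has_real_derivative pG (\<lambda>a _. P' a) F2 \<beta> y) (at 0)"
proof -
  have "((\<lambda>s. sum_list (map (\<lambda>ab. P (fst ab) s * F2 (snd ab) y) (splits \<beta>))) has_real_derivative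
       sum_list (map (\<lambda>ab. P' (fst ab) * F2 (snd ab) y) (splits \<beta>))) (at 0)"
    by (rule deriv_sum_list) (use assms in \<open>auto intro!: derivative_eq_intros\<close>)
  then show ?thesis by (simp add: pG_def)
qed

lemma exists_good_s:
  assumes deg: "\<forall>l<length Xs. is_degree (snd (Xs!l))"
  shows "\<exists>s>0. s \<le> 1 \<and> (\<forall>l<length Xs. real (length Xs) * (degpow (vec s) (snd (Xs!l)))\<^sup>2 \<le> 1)"
proof -
  define L where "L = length Xs"
  define S where "S l = (\<Sum>\<mu>\<in>UNIV. snd (Xs!l) $ \<mu>)" for l
  have ev1: "\<forall>\<^sub>F s in at_right (0::real). 0 < s" by (rule eventually_at_right_less)
  have ev2: "\<forall>\<^sub>F s in at_right (0::real). s < 1"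
    by (rule order_tendstoD(2)[OF tendsto_ident_at]) simp
  have ev3: "\<forall>l\<in>{..<L}. \<forall>\<^sub>F s in at_right (0::real). real L * (s powr S l)\<^sup>2 < 1"
  proof
    fix l assume "l \<in> {..<L}"
    then have Sp: "0 < S l" unfolding S_def L_def using deg degree_sum_pos by auto
    have "((\<lambda>s. s powr S l) \<longlongrightarrow> 0) (at_right (0::real))"
      by (rule tendsto_zero_powrI[OF tendsto_ident_at tendsto_const _ Sp])
         (rule eventually_mono[OF ev1], simp)
    then have "((\<lambda>s. real L * (s powr S l)\<^sup>2) \<longlongrightarrow> real L * 0\<^sup>2) (at_right (0::real))"
      by (intro tendsto_intros)
    then show "\<forall>\<^sub>F s in at_right (0::real). real L * (s powr S l)\<^sup>2 < 1"
      by (rule order_tendstoD(2)) simp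
  qed
  have "\<forall>\<^sub>F s in at_right (0::real). 0 < s \<and> s < 1 \<and> (\<forall>l\<in>{..<L}. real L * (s powr S l)\<^sup>2 < 1)"
    using ev1 ev2 eventually_ball_finite[OF _ ev3] by (auto intro: eventually_conj)
  then obtain s where s: "0 < s" "s < 1" "\<forall>l\<in>{..<L}. real L * (s powr S l)\<^sup>2 < 1"
    using eventually_happens[of _ "at_right (0::real)"] by auto
  show ?thesis
    using s by (intro exI[of _ s]) (auto simp: degpow_vec_pos S_def L_def less_imp_le)
qed

lemma common_scale:
  fixes \<sigma> :: "nat \<Rightarrow> nat" and Xs Ys :: "((real^'n \<Rightarrow> real^'n) \<times> (real^'v)) list"
  assumes \<sigma>: "\<forall>l<length Xs. \<sigma> l < length Ys \<and> Ys ! \<sigma> l = Xs ! l"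
    and deg: "\<forall>l<length Xs. is_degree (snd (Xs!l))"
    and pY: "0 < \<xi>Y" and pI: "\<forall>i<length Ys. 0 < \<xi>I i"
  shows "\<exists>\<xi>>0. (\<forall>x \<delta>. zball \<Omega> Xs x (\<xi> *\<^sub>R \<delta>) \<subseteq> zball \<Omega> Ys x (\<xi>Y *\<^sub>R \<delta>) \<and>
          (\<forall>i<length Ys. zball \<Omega> Xs x (\<xi> *\<^sub>R \<delta>) \<subseteq> zball \<Omega> Xs x (\<xi>I i *\<^sub>R \<delta>))) \<and>
        (\<forall>i<length Ys. \<forall>x. ode_solvable \<Omega> Xs x (vec (\<xi>I i)) \<longrightarrow> ode_solvable \<Omega> Xs x (vec \<xi>))"
proof -
  obtain s where s: "0 < s" "s \<le> 1" and good: "\<forall>l<length Xs. real (length Xs) * (degpow (vec s) (snd (Xs!l)))\<^sup>2 \<le> 1"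
    using exists_good_s[OF deg] by blast
  define \<xi>0 where "\<xi>0 = Min (insert \<xi>Y (\<xi>I ` {..<length Ys}))"
  have \<xi>0p: "0 < \<xi>0" unfolding \<xi>0_def using pY pI by (subst Min_gr_iff) auto
  have \<xi>0Y: "\<xi>0 \<le> \<xi>Y" unfolding \<xi>0_def by (rule Min_le) auto
  have \<xi>0I: "\<xi>0 \<le> \<xi>I i" if "i < length Ys" for i unfolding \<xi>0_def by (rule Min_le) (use that in auto)
  define \<xi> where "\<xi> = s * \<xi>0"
  have \<xi>p: "0 < \<xi>" using s \<xi>0p by (simp add: \<xi>_def)
  have goodr: "\<forall>l<length Xs. real (length Xs) * (degpow (vec r) (snd (Xs!l)))\<^sup>2 \<le> 1" if "0 < r" "r \<le> s" for r
  proof (intro allI impI)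
    fix l assume l: "l < length Xs"
    have "degpow (vec r) (snd (Xs!l)) \<le> degpow (vec s) (snd (Xs!l))"
      using degpow_vec_mono[OF that] deg l by blast
    then have "(degpow (vec r) (snd (Xs!l)))\<^sup>2 \<le> (degpow (vec s) (snd (Xs!l)))\<^sup>2"
      by (simp add: degpow_nonneg power_mono)
    then show "real (length Xs) * (degpow (vec r) (snd (Xs!l)))\<^sup>2 \<le> 1"
      using good l by (smt (verit, ccfv_SIG) mult_left_mono of_nat_0_le_iff)
  qed
  have rle: "0 < \<xi> / \<xi>' \<and> \<xi> / \<xi>' \<le> s" if "\<xi>0 \<le> \<xi>'" for \<xi>'
  proof -
    have p: "0 < \<xi>'" using that \<xi>0p by simp
    have "\<xi> \<le> s * \<xi>'" unfolding \<xi>_def using that s by (simp add: mult_left_mono)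
    then show ?thesis using p \<xi>p by (simp add: divide_le_eq mult.commute)
  qed
  have scl: "\<xi> *\<^sub>R \<delta> = (\<xi> / \<xi>') *\<^sub>R (\<xi>' *\<^sub>R \<delta>)" if "\<xi>0 \<le> \<xi>'" for \<xi>' and \<delta> :: "real^'v"
    using that \<xi>0p by simp
  have A: "zball \<Omega> Xs x (\<xi> *\<^sub>R \<delta>) \<subseteq> zball \<Omega> Ys x (\<xi>Y *\<^sub>R \<delta>)" for x \<delta>
    unfolding scl[OF \<xi>0Y] by (rule zball_transfer[OF \<sigma>]) (use goodr rle[OF \<xi>0Y] in blast)
  have B: "zball \<Omega> Xs x (\<xi> *\<^sub>R \<delta>) \<subseteq> zball \<Omega> Xs x (\<xi>I i *\<^sub>R \<delta>)" if "i < length Ys" for x \<delta> i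
    unfolding scl[OF \<xi>0I[OF that]]
    by (rule zball_transfer[of Xs "\<lambda>l. l"]) (use goodr rle[OF \<xi>0I[OF that]] in auto)
  have C: "ode_solvable \<Omega> Xs x (vec \<xi>)" if "i < length Ys" "ode_solvable \<Omega> Xs x (vec (\<xi>I i))" for i x
  proof -
    have r: "0 < \<xi> / \<xi>I i" "\<xi> / \<xi>I i \<le> s" using rle[OF \<xi>0I[OF that(1)]] by auto
    have "vec \<xi> = (\<xi> / \<xi>I i) *\<^sub>R (vec (\<xi>I i) :: real^'v)"
      using r \<xi>0I[OF that(1)] \<xi>0p by (simp add: vec_eq_iff)
    moreover have "ode_solvable \<Omega> Xs x ((\<xi> / \<xi>I i) *\<^sub>R (vec (\<xi>I i) :: real^'v))"
      by (rule ode_solvable_scale[OF that(2)])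
         (use r s deg in \<open>auto intro!: degpow_vec_le1\<close>)
    ultimately show ?thesis by simp
  qed
  show ?thesis using \<xi>p A B C by blast
qed

definition vf_base where
  "vf_base \<Omega> Zs U \<xi> \<longleftrightarrow> open U \<and> 0 \<in> U \<and> U \<subseteq> \<Omega> \<and> 0 < \<xi> \<and> (\<forall>x\<in>U. ode_solvable \<Omega> Zs x (vec \<xi>))"

definition vf_rep where
  "vf_rep \<Omega> Zs X0 d0 U \<xi> c \<longleftrightarrow> (\<forall>x\<in>U. \<forall>\<delta>\<in>unit_cube. \<forall>y\<in>zball \<Omega> Zs x (\<xi> *\<^sub>R \<delta>).
             degpow \<delta> d0 *\<^sub>R X0 y = (\<Sum>l<length Zs. c x \<delta> l y *\<^sub>R sfield \<delta> (Zs ! l) y))"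

definition vf_G0 where
  "vf_G0 \<Omega> Zs U \<xi> c G \<longleftrightarrow> (\<forall>x\<in>U. \<forall>\<delta>\<in>unit_cube. \<forall>l<length Zs.
             \<forall>y\<in>zball \<Omega> Zs x (\<xi> *\<^sub>R \<delta>). G x \<delta> l [] y = c x \<delta> l y)"

definition vf_lie where
  "vf_lie \<Omega> Zs U \<xi> G \<longleftrightarrow> (\<forall>x\<in>U. \<forall>\<delta>\<in>unit_cube. \<forall>l<length Zs.
             \<forall>\<beta> j. set \<beta> \<subseteq> {..<length Zs} \<and> j < length Zs \<longrightarrow>
                lie_deriv_on (zball \<Omega> Zs x (\<xi> *\<^sub>R \<delta>)) (sfield \<delta> (Zs ! j))
                  (G x \<delta> l \<beta>) (G x \<delta> l (j # \<beta>)))"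

definition vf_cont where
  "vf_cont \<Omega> Zs U \<xi> G \<longleftrightarrow> (\<forall>x\<in>U. \<forall>\<delta>\<in>unit_cube. \<forall>l<length Zs.
             \<forall>\<beta>. set \<beta> \<subseteq> {..<length Zs} \<longrightarrow>
                continuous_on (zball \<Omega> Zs x (\<xi> *\<^sub>R \<delta>)) (G x \<delta> l \<beta>))"

definition vf_bnd where
  "vf_bnd \<Omega> Zs U \<xi> G \<longleftrightarrow> (\<forall>m. \<exists>C. \<forall>x\<in>U. \<forall>\<delta>\<in>unit_cube. \<forall>l<length Zs. \<forall>\<beta>.
          set \<beta> \<subseteq> {..<length Zs} \<and> length \<beta> \<le> m \<longrightarrow>
          (\<forall>y\<in>zball \<Omega> Zs x (\<xi> *\<^sub>R \<delta>). \<bar>G x \<delta> l \<beta> y\<bar> \<le> C))"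

definition VFD where
  "VFD \<Omega> Zs X0 d0 U \<xi> c G \<longleftrightarrow> vf_base \<Omega> Zs U \<xi> \<and> vf_rep \<Omega> Zs X0 d0 U \<xi> c \<and> vf_G0 \<Omega> Zs U \<xi> c G \<and>
     vf_lie \<Omega> Zs U \<xi> G \<and> vf_cont \<Omega> Zs U \<xi> G \<and> vf_bnd \<Omega> Zs U \<xi> G"

lemma controls_vf_intro:
  fixes Zs :: "((real^'n \<Rightarrow> real^'n) \<times> (real^'v)) list"
  assumes "vf_base \<Omega> Zs U \<xi>" "vf_rep \<Omega> Zs X0 d0 U \<xi> c" "vf_G0 \<Omega> Zs U \<xi> c G"
     "vf_lie \<Omega> Zs U \<xi> G" "vf_cont \<Omega> Zs U \<xi> G" "vf_bnd \<Omega> Zs U \<xi> G"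
  shows "controls_vf \<Omega> Zs X0 d0"
  unfolding controls_vf_def
proof (intro exI[of _ U] exI[of _ \<xi>] conjI)
  show "open U" "0 \<in> U" "U \<subseteq> \<Omega>" "0 < \<xi>" "\<forall>x\<in>U. ode_solvable \<Omega> Zs x (vec \<xi>)"
    using assms(1) unfolding vf_base_def by auto
  show "\<exists>c G. (\<forall>x\<in>U. \<forall>\<delta>\<in>unit_cube.
          (\<forall>y\<in>zball \<Omega> Zs x (\<xi> *\<^sub>R \<delta>).
             degpow \<delta> d0 *\<^sub>R X0 y = (\<Sum>l<length Zs. c x \<delta> l y *\<^sub>R sfield \<delta> (Zs ! l) y)) \<and>
          (\<forall>l<length Zs.
             (\<forall>y\<in>zball \<Omega> Zs x (\<xi> *\<^sub>R \<delta>). G x \<delta> l [] y = c x \<delta> l y) \<and>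
             (\<forall>\<beta> j. set \<beta> \<subseteq> {..<length Zs} \<and> j < length Zs \<longrightarrow>
                lie_deriv_on (zball \<Omega> Zs x (\<xi> *\<^sub>R \<delta>)) (sfield \<delta> (Zs ! j))
                  (G x \<delta> l \<beta>) (G x \<delta> l (j # \<beta>))) \<and>
             (\<forall>\<beta>. set \<beta> \<subseteq> {..<length Zs} \<longrightarrow>
                continuous_on (zball \<Omega> Zs x (\<xi> *\<^sub>R \<delta>)) (G x \<delta> l \<beta>)))) \<and>
       (\<forall>m. \<exists>C. \<forall>x\<in>U. \<forall>\<delta>\<in>unit_cube. \<forall>l<length Zs. \<forall>\<beta>.
          set \<beta> \<subseteq> {..<length Zs} \<and> length \<beta> \<le> m \<longrightarrow>
          (\<forall>y\<in>zball \<Omega> Zs x (\<xi> *\<^sub>R \<delta>). \<bar>G x \<delta> l \<beta> y\<bar> \<le> C))"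
    apply (intro exI[of _ c] exI[of _ G] conjI ballI allI impI)
    using assms(2-6) unfolding vf_rep_def vf_G0_def vf_lie_def vf_cont_def vf_bnd_def
    by (blast, blast, blast, blast, blast)
qed

lemma controls_vf_elim:
  fixes Zs :: "((real^'n \<Rightarrow> real^'n) \<times> (real^'v)) list"
  assumes "controls_vf \<Omega> Zs X0 d0"
  shows "\<exists>U \<xi> c G. VFD \<Omega> Zs X0 d0 U \<xi> c G"
proof -
  obtain U \<xi> where H: "open U \<and> 0 \<in> U \<and> U \<subseteq> \<Omega> \<and> 0 < \<xi> \<and> (\<forall>x\<in>U. ode_solvable \<Omega> Zs x (vec \<xi>)) \<and> (\<exists>c G. (\<forall>x\<in>U. \<forall>\<delta>\<in>unit_cube.
          (\<forall>y\<in>zball \<Omega> Zs x (\<xi> *\<^sub>R \<delta>).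
             degpow \<delta> d0 *\<^sub>R X0 y = (\<Sum>l<length Zs. c x \<delta> l y *\<^sub>R sfield \<delta> (Zs ! l) y)) \<and>
          (\<forall>l<length Zs.
             (\<forall>y\<in>zball \<Omega> Zs x (\<xi> *\<^sub>R \<delta>). G x \<delta> l [] y = c x \<delta> l y) \<and>
             (\<forall>\<beta> j. set \<beta> \<subseteq> {..<length Zs} \<and> j < length Zs \<longrightarrow>
                lie_deriv_on (zball \<Omega> Zs x (\<xi> *\<^sub>R \<delta>)) (sfield \<delta> (Zs ! j))
                  (G x \<delta> l \<beta>) (G x \<delta> l (j # \<beta>))) \<and>
             (\<forall>\<beta>. set \<beta> \<subseteq> {..<length Zs} \<longrightarrow>
                continuous_on (zball \<Omega> Zs x (\<xi> *\<^sub>R \<delta>)) (G x \<delta> l \<beta>)))) \<and>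
       (\<forall>m. \<exists>C. \<forall>x\<in>U. \<forall>\<delta>\<in>unit_cube. \<forall>l<length Zs. \<forall>\<beta>.
          set \<beta> \<subseteq> {..<length Zs} \<and> length \<beta> \<le> m \<longrightarrow>
          (\<forall>y\<in>zball \<Omega> Zs x (\<xi> *\<^sub>R \<delta>). \<bar>G x \<delta> l \<beta> y\<bar> \<le> C)))"
    using assms unfolding controls_vf_def by (elim exE) (rule that)
  note b = H[THEN conjunct1] H[THEN conjunct2, THEN conjunct1] H[THEN conjunct2, THEN conjunct2, THEN conjunct1]
    H[THEN conjunct2, THEN conjunct2, THEN conjunct2, THEN conjunct1]
    H[THEN conjunct2, THEN conjunct2, THEN conjunct2, THEN conjunct2, THEN conjunct1]
  note ex = H[THEN conjunct2, THEN conjunct2, THEN conjunct2, THEN conjunct2, THEN conjunct2]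
  then obtain c G where P: "\<forall>x\<in>U. \<forall>\<delta>\<in>unit_cube.
          (\<forall>y\<in>zball \<Omega> Zs x (\<xi> *\<^sub>R \<delta>).
             degpow \<delta> d0 *\<^sub>R X0 y = (\<Sum>l<length Zs. c x \<delta> l y *\<^sub>R sfield \<delta> (Zs ! l) y)) \<and>
          (\<forall>l<length Zs.
             (\<forall>y\<in>zball \<Omega> Zs x (\<xi> *\<^sub>R \<delta>). G x \<delta> l [] y = c x \<delta> l y) \<and>
             (\<forall>\<beta> j. set \<beta> \<subseteq> {..<length Zs} \<and> j < length Zs \<longrightarrow>
                lie_deriv_on (zball \<Omega> Zs x (\<xi> *\<^sub>R \<delta>)) (sfield \<delta> (Zs ! j))
                  (G x \<delta> l \<beta>) (G x \<delta> l (j # \<beta>))) \<and>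
             (\<forall>\<beta>. set \<beta> \<subseteq> {..<length Zs} \<longrightarrow>
                continuous_on (zball \<Omega> Zs x (\<xi> *\<^sub>R \<delta>)) (G x \<delta> l \<beta>)))"
    and B: "\<forall>m. \<exists>C. \<forall>x\<in>U. \<forall>\<delta>\<in>unit_cube. \<forall>l<length Zs. \<forall>\<beta>.
          set \<beta> \<subseteq> {..<length Zs} \<and> length \<beta> \<le> m \<longrightarrow>
          (\<forall>y\<in>zball \<Omega> Zs x (\<xi> *\<^sub>R \<delta>). \<bar>G x \<delta> l \<beta> y\<bar> \<le> C)"
    using ex by (elim exE conjE) (rule that)
  have "vf_base \<Omega> Zs U \<xi>" using b unfolding vf_base_def by blast
  moreover have "vf_rep \<Omega> Zs X0 d0 U \<xi> c" unfolding vf_rep_def using P by blast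
  moreover have "vf_G0 \<Omega> Zs U \<xi> c G" unfolding vf_G0_def using P by blast
  moreover have "vf_lie \<Omega> Zs U \<xi> G" unfolding vf_lie_def using P by blast
  moreover have "vf_cont \<Omega> Zs U \<xi> G" unfolding vf_cont_def using P by blast
  moreover have "vf_bnd \<Omega> Zs U \<xi> G" unfolding vf_bnd_def using B by blast
  ultimately show ?thesis unfolding VFD_def by blast
qed

lemma part1:
  fixes Xs Ys :: "((real^'n \<Rightarrow> real^'n) \<times> (real^'v)) list" and \<sigma> :: "nat \<Rightarrow> nat"
  assumes ne: "Ys \<noteq> []"
    and \<sigma>: "\<forall>l<length Xs. \<sigma> l < length Ys \<and> Ys ! \<sigma> l = Xs ! l"
    and deg: "\<forall>l<length Xs. is_degree (snd (Xs!l))"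
    and Y: "VFD \<Omega> Ys X0 d0 UY \<xi>Y cY GY"
    and X: "\<forall>i<length Ys. VFD \<Omega> Xs (fst (Ys!i)) (snd (Ys!i)) (UI i) (\<xi>I i) (cI i) (GI i)"
  shows "controls_vf \<Omega> Xs X0 d0"
proof -
  have baseY: "open UY" "0 \<in> UY" "UY \<subseteq> \<Omega>" "0 < \<xi>Y" using Y unfolding VFD_def vf_base_def by auto
  have baseI: "open (UI i)" "0 \<in> UI i" "0 < \<xi>I i" "\<forall>x\<in>UI i. ode_solvable \<Omega> Xs x (vec (\<xi>I i))"
    if "i < length Ys" for i using X that unfolding VFD_def vf_base_def by auto
  have Yrep: "\<And>x \<delta> y. x \<in> UY \<Longrightarrow> \<delta> \<in> unit_cube \<Longrightarrow> y \<in> zball \<Omega> Ys x (\<xi>Y *\<^sub>R \<delta>) \<Longrightarrow>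
      degpow \<delta> d0 *\<^sub>R X0 y = (\<Sum>i<length Ys. cY x \<delta> i y *\<^sub>R sfield \<delta> (Ys ! i) y)"
    using Y unfolding VFD_def vf_rep_def by blast
  have Irep: "\<And>i x \<delta> y. i < length Ys \<Longrightarrow> x \<in> UI i \<Longrightarrow> \<delta> \<in> unit_cube \<Longrightarrow> y \<in> zball \<Omega> Xs x (\<xi>I i *\<^sub>R \<delta>) \<Longrightarrow>
      degpow \<delta> (snd (Ys!i)) *\<^sub>R fst (Ys!i) y = (\<Sum>l<length Xs. cI i x \<delta> l y *\<^sub>R sfield \<delta> (Xs ! l) y)"
    using X unfolding VFD_def vf_rep_def by blast
  have YG0: "\<And>x \<delta> i y. x \<in> UY \<Longrightarrow> \<delta> \<in> unit_cube \<Longrightarrow> i < length Ys \<Longrightarrow> y \<in> zball \<Omega> Ys x (\<xi>Y *\<^sub>R \<delta>) \<Longrightarrow>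
      GY x \<delta> i [] y = cY x \<delta> i y"
    using Y unfolding VFD_def vf_G0_def by blast
  have IG0: "\<And>i x \<delta> l y. i < length Ys \<Longrightarrow> x \<in> UI i \<Longrightarrow> \<delta> \<in> unit_cube \<Longrightarrow> l < length Xs \<Longrightarrow>
      y \<in> zball \<Omega> Xs x (\<xi>I i *\<^sub>R \<delta>) \<Longrightarrow> GI i x \<delta> l [] y = cI i x \<delta> l y"
    using X unfolding VFD_def vf_G0_def by blast
  have Ylie: "\<And>x \<delta> i \<beta> j. x \<in> UY \<Longrightarrow> \<delta> \<in> unit_cube \<Longrightarrow> i < length Ys \<Longrightarrow> set \<beta> \<subseteq> {..<length Ys} \<Longrightarrow> j < length Ys \<Longrightarrow>
      lie_deriv_on (zball \<Omega> Ys x (\<xi>Y *\<^sub>R \<delta>)) (sfield \<delta> (Ys ! j)) (GY x \<delta> i \<beta>) (GY x \<delta> i (j # \<beta>))"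
    using Y unfolding VFD_def vf_lie_def by blast
  have Ilie: "\<And>i x \<delta> l \<beta> j. i < length Ys \<Longrightarrow> x \<in> UI i \<Longrightarrow> \<delta> \<in> unit_cube \<Longrightarrow> l < length Xs \<Longrightarrow>
      set \<beta> \<subseteq> {..<length Xs} \<Longrightarrow> j < length Xs \<Longrightarrow>
      lie_deriv_on (zball \<Omega> Xs x (\<xi>I i *\<^sub>R \<delta>)) (sfield \<delta> (Xs ! j)) (GI i x \<delta> l \<beta>) (GI i x \<delta> l (j # \<beta>))"
    using X unfolding VFD_def vf_lie_def by blast
  have Ycont: "\<And>x \<delta> i \<beta>. x \<in> UY \<Longrightarrow> \<delta> \<in> unit_cube \<Longrightarrow> i < length Ys \<Longrightarrow> set \<beta> \<subseteq> {..<length Ys} \<Longrightarrow>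
      continuous_on (zball \<Omega> Ys x (\<xi>Y *\<^sub>R \<delta>)) (GY x \<delta> i \<beta>)"
    using Y unfolding VFD_def vf_cont_def by blast
  have Icont: "\<And>i x \<delta> l \<beta>. i < length Ys \<Longrightarrow> x \<in> UI i \<Longrightarrow> \<delta> \<in> unit_cube \<Longrightarrow> l < length Xs \<Longrightarrow>
      set \<beta> \<subseteq> {..<length Xs} \<Longrightarrow> continuous_on (zball \<Omega> Xs x (\<xi>I i *\<^sub>R \<delta>)) (GI i x \<delta> l \<beta>)"
    using X unfolding VFD_def vf_cont_def by blast
  have Ybnd: "vf_bnd \<Omega> Ys UY \<xi>Y GY" using Y unfolding VFD_def by blast
  have Ibnd: "\<And>i. i < length Ys \<Longrightarrow> vf_bnd \<Omega> Xs (UI i) (\<xi>I i) (GI i)" using X unfolding VFD_def by blast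

  obtain \<xi> where \<xi>p: "0 < \<xi>"
    and inc: "\<forall>x \<delta>. zball \<Omega> Xs x (\<xi> *\<^sub>R \<delta>) \<subseteq> zball \<Omega> Ys x (\<xi>Y *\<^sub>R \<delta>) \<and>
          (\<forall>i<length Ys. zball \<Omega> Xs x (\<xi> *\<^sub>R \<delta>) \<subseteq> zball \<Omega> Xs x (\<xi>I i *\<^sub>R \<delta>))"
    and solv: "\<forall>i<length Ys. \<forall>x. ode_solvable \<Omega> Xs x (vec (\<xi>I i)) \<longrightarrow> ode_solvable \<Omega> Xs x (vec \<xi>)"
    using common_scale[OF \<sigma> deg baseY(4), of \<xi>I \<Omega>] baseI(3) by blast
  have incY: "zball \<Omega> Xs x (\<xi> *\<^sub>R \<delta>) \<subseteq> zball \<Omega> Ys x (\<xi>Y *\<^sub>R \<delta>)" for x \<delta> using inc by blast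
  have incI: "i < length Ys \<Longrightarrow> zball \<Omega> Xs x (\<xi> *\<^sub>R \<delta>) \<subseteq> zball \<Omega> Xs x (\<xi>I i *\<^sub>R \<delta>)" for x \<delta> i using inc by blast

  define U where "U = UY \<inter> (\<Inter>i\<in>{..<length Ys}. UI i)"
  define c where "c x \<delta> l y = (\<Sum>i<length Ys. cY x \<delta> i y * cI i x \<delta> l y)" for x \<delta> l y
  define G where "G x \<delta> l \<beta> y = (\<Sum>i<length Ys. pG (\<lambda>a. GY x \<delta> i (map \<sigma> a)) (GI i x \<delta> l) \<beta> y)" for x \<delta> l \<beta> y
  have UY: "x \<in> U \<Longrightarrow> x \<in> UY" and UI: "x \<in> U \<Longrightarrow> i < length Ys \<Longrightarrow> x \<in> UI i" for x i
    unfolding U_def by auto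
  have lenY: "0 < length Ys" using ne by simp
  have mapS: "set \<beta> \<subseteq> {..<length Xs} \<Longrightarrow> set (map \<sigma> \<beta>) \<subseteq> {..<length Ys}" for \<beta>
    using \<sigma> by auto

  have "vf_base \<Omega> Xs U \<xi>"
    unfolding vf_base_def
  proof (intro conjI ballI)
    have "open (\<Inter>i\<in>{..<length Ys}. UI i)" by (rule open_INT) (use baseI in auto)
    then show "open U" unfolding U_def using baseY by (intro open_Int) auto
    show "0 \<in> U" unfolding U_def using baseY baseI by auto
    show "U \<subseteq> \<Omega>" unfolding U_def using baseY by auto
    show "0 < \<xi>" by (rule \<xi>p)
    fix x assume "x \<in> U"
    then show "ode_solvable \<Omega> Xs x (vec \<xi>)" using solv baseI(4)[OF lenY] UI[OF _ lenY] lenY by blast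
  qed
  moreover have "vf_rep \<Omega> Xs X0 d0 U \<xi> c"
    unfolding vf_rep_def
  proof (intro ballI)
    fix x and \<delta> :: "real^'v" and y assume x: "x \<in> U" and \<delta>: "\<delta> \<in> unit_cube" and y: "y \<in> zball \<Omega> Xs x (\<xi> *\<^sub>R \<delta>)"
    have "degpow \<delta> d0 *\<^sub>R X0 y = (\<Sum>i<length Ys. cY x \<delta> i y *\<^sub>R sfield \<delta> (Ys ! i) y)"
      using Yrep[OF UY[OF x] \<delta>] incY y by blast
    also have "\<dots> = (\<Sum>i<length Ys. cY x \<delta> i y *\<^sub>R (\<Sum>l<length Xs. cI i x \<delta> l y *\<^sub>R sfield \<delta> (Xs ! l) y))"
    proof (rule sum.cong)
      fix i assume i: "i \<in> {..<length Ys}"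
      have "sfield \<delta> (Ys ! i) y = degpow \<delta> (snd (Ys!i)) *\<^sub>R fst (Ys!i) y" by (simp add: sfield_def)
      also have "\<dots> = (\<Sum>l<length Xs. cI i x \<delta> l y *\<^sub>R sfield \<delta> (Xs ! l) y)"
        using Irep[of i x \<delta> y] i UI[OF x] \<delta> incI y by blast
      finally show "cY x \<delta> i y *\<^sub>R sfield \<delta> (Ys ! i) y = cY x \<delta> i y *\<^sub>R (\<Sum>l<length Xs. cI i x \<delta> l y *\<^sub>R sfield \<delta> (Xs ! l) y)"
        by simp
    qed simp
    also have "\<dots> = (\<Sum>i<length Ys. \<Sum>l<length Xs. (cY x \<delta> i y * cI i x \<delta> l y) *\<^sub>R sfield \<delta> (Xs ! l) y)"
      by (simp add: scaleR_sum_right)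
    also have "\<dots> = (\<Sum>l<length Xs. \<Sum>i<length Ys. (cY x \<delta> i y * cI i x \<delta> l y) *\<^sub>R sfield \<delta> (Xs ! l) y)"
      by (rule sum.swap)
    also have "\<dots> = (\<Sum>l<length Xs. c x \<delta> l y *\<^sub>R sfield \<delta> (Xs ! l) y)"
      by (simp add: c_def scaleR_sum_left)
    finally show "degpow \<delta> d0 *\<^sub>R X0 y = (\<Sum>l<length Xs. c x \<delta> l y *\<^sub>R sfield \<delta> (Xs ! l) y)" .
  qed
  moreover have "vf_G0 \<Omega> Xs U \<xi> c G"
    unfolding vf_G0_def
  proof (intro ballI allI impI)
    fix x and \<delta> :: "real^'v" and l y assume x: "x \<in> U" and \<delta>: "\<delta> \<in> unit_cube" and l: "l < length Xs" and y: "y \<in> zball \<Omega> Xs x (\<xi> *\<^sub>R \<delta>)"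
    show "G x \<delta> l [] y = c x \<delta> l y"
      unfolding G_def c_def pG_Nil
      by (rule sum.cong) (use YG0 IG0 UY UI x \<delta> l y incY incI in \<open>auto simp: subset_iff\<close>)
  qed
  moreover have "vf_lie \<Omega> Xs U \<xi> G"
    unfolding vf_lie_def
  proof (intro ballI allI impI)
    fix x and \<delta> :: "real^'v" and l \<beta> j assume x: "x \<in> U" and \<delta>: "\<delta> \<in> unit_cube" and l: "l < length Xs"
      and bj: "set \<beta> \<subseteq> {..<length Xs} \<and> j < length Xs"
    have Gf: "G x \<delta> l \<gamma> = (\<lambda>y. \<Sum>i<length Ys. pG (\<lambda>a. GY x \<delta> i (map \<sigma> a)) (GI i x \<delta> l) \<gamma> y)" for \<gamma>
      by (rule ext) (simp add: G_def)
    show "lie_deriv_on (zball \<Omega> Xs x (\<xi> *\<^sub>R \<delta>)) (sfield \<delta> (Xs ! j)) (G x \<delta> l \<beta>) (G x \<delta> l (j # \<beta>))"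
      unfolding Gf
    proof (rule lie_sum, simp, intro ballI lie_pG conjI)
      fix i ab assume i: "i \<in> {..<length Ys}" and ab: "ab \<in> set (splits \<beta>)"
      have sa: "set (fst ab) \<subseteq> {..<length Xs}" "set (snd ab) \<subseteq> {..<length Xs}"
        using splits_props[OF ab] bj by auto
      have "lie_deriv_on (zball \<Omega> Ys x (\<xi>Y *\<^sub>R \<delta>)) (sfield \<delta> (Ys ! \<sigma> j))
          (GY x \<delta> i (map \<sigma> (fst ab))) (GY x \<delta> i (\<sigma> j # map \<sigma> (fst ab)))"
        by (rule Ylie) (use UY[OF x] \<delta> i mapS[OF sa(1)] \<sigma> bj in auto)
      then show "lie_deriv_on (zball \<Omega> Xs x (\<xi> *\<^sub>R \<delta>)) (sfield \<delta> (Xs ! j))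
          ((\<lambda>a. GY x \<delta> i (map \<sigma> a)) (fst ab)) ((\<lambda>a. GY x \<delta> i (map \<sigma> a)) (j # fst ab))"
        using \<sigma> bj by (auto intro: lie_mono[OF incY])
      have "lie_deriv_on (zball \<Omega> Xs x (\<xi>I i *\<^sub>R \<delta>)) (sfield \<delta> (Xs ! j))
          (GI i x \<delta> l (snd ab)) (GI i x \<delta> l (j # snd ab))"
        by (rule Ilie) (use UI[OF x] \<delta> i l sa bj in auto)
      then show "lie_deriv_on (zball \<Omega> Xs x (\<xi> *\<^sub>R \<delta>)) (sfield \<delta> (Xs ! j))
          (GI i x \<delta> l (snd ab)) (GI i x \<delta> l (j # snd ab))"
        using i by (auto intro: lie_mono[OF incI])
    qed
  qed
  moreover have "vf_cont \<Omega> Xs U \<xi> G"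
    unfolding vf_cont_def
  proof (intro ballI allI impI)
    fix x and \<delta> :: "real^'v" and l \<beta> assume x: "x \<in> U" and \<delta>: "\<delta> \<in> unit_cube" and l: "l < length Xs"
      and b: "set \<beta> \<subseteq> {..<length Xs}"
    have Gf: "G x \<delta> l \<beta> = (\<lambda>y. \<Sum>i<length Ys. pG (\<lambda>a. GY x \<delta> i (map \<sigma> a)) (GI i x \<delta> l) \<beta> y)"
      by (rule ext) (simp add: G_def)
    show "continuous_on (zball \<Omega> Xs x (\<xi> *\<^sub>R \<delta>)) (G x \<delta> l \<beta>)"
      unfolding Gf
    proof (rule continuous_on_sum, intro cont_pG ballI conjI)
      fix i ab assume i: "i \<in> {..<length Ys}" and ab: "ab \<in> set (splits \<beta>)"
      have sa: "set (fst ab) \<subseteq> {..<length Xs}" "set (snd ab) \<subseteq> {..<length Xs}"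
        using splits_props[OF ab] b by auto
      show "continuous_on (zball \<Omega> Xs x (\<xi> *\<^sub>R \<delta>)) ((\<lambda>a. GY x \<delta> i (map \<sigma> a)) (fst ab))"
        using Ycont[OF UY[OF x] \<delta> _ mapS[OF sa(1)]] i by (auto intro: continuous_on_subset[OF _ incY])
      show "continuous_on (zball \<Omega> Xs x (\<xi> *\<^sub>R \<delta>)) (GI i x \<delta> l (snd ab))"
        using Icont[OF _ UI[OF x] \<delta> l sa(2)] i by (auto intro: continuous_on_subset[OF _ incI])
    qed
  qed
  moreover have "vf_bnd \<Omega> Xs U \<xi> G"
    unfolding vf_bnd_def
  proof
    fix m
    obtain CY where CY: "\<forall>x\<in>UY. \<forall>\<delta>\<in>unit_cube. \<forall>i<length Ys. \<forall>\<beta>.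
          set \<beta> \<subseteq> {..<length Ys} \<and> length \<beta> \<le> m \<longrightarrow>
          (\<forall>y\<in>zball \<Omega> Ys x (\<xi>Y *\<^sub>R \<delta>). \<bar>GY x \<delta> i \<beta> y\<bar> \<le> CY)"
      using Ybnd unfolding vf_bnd_def by blast
    have "\<forall>i. \<exists>C. i < length Ys \<longrightarrow> (\<forall>x\<in>UI i. \<forall>\<delta>\<in>unit_cube. \<forall>l<length Xs. \<forall>\<beta>.
          set \<beta> \<subseteq> {..<length Xs} \<and> length \<beta> \<le> m \<longrightarrow>
          (\<forall>y\<in>zball \<Omega> Xs x (\<xi>I i *\<^sub>R \<delta>). \<bar>GI i x \<delta> l \<beta> y\<bar> \<le> C))"
      using Ibnd unfolding vf_bnd_def by blast
    then obtain CI where CI: "\<forall>i. i < length Ys \<longrightarrow> (\<forall>x\<in>UI i. \<forall>\<delta>\<in>unit_cube. \<forall>l<length Xs. \<forall>\<beta>.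
          set \<beta> \<subseteq> {..<length Xs} \<and> length \<beta> \<le> m \<longrightarrow>
          (\<forall>y\<in>zball \<Omega> Xs x (\<xi>I i *\<^sub>R \<delta>). \<bar>GI i x \<delta> l \<beta> y\<bar> \<le> CI i))"
      by (metis choice)
    show "\<exists>C. \<forall>x\<in>U. \<forall>\<delta>\<in>unit_cube. \<forall>l<length Xs. \<forall>\<beta>.
          set \<beta> \<subseteq> {..<length Xs} \<and> length \<beta> \<le> m \<longrightarrow>
          (\<forall>y\<in>zball \<Omega> Xs x (\<xi> *\<^sub>R \<delta>). \<bar>G x \<delta> l \<beta> y\<bar> \<le> C)"
    proof (intro exI[of _ "\<Sum>i<length Ys. 2 ^ m * (\<bar>CY\<bar> * \<bar>CI i\<bar>)"] ballI allI impI)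
      fix x and \<delta> :: "real^'v" and l \<beta> y assume x: "x \<in> U" and \<delta>: "\<delta> \<in> unit_cube" and l: "l < length Xs"
        and b: "set \<beta> \<subseteq> {..<length Xs} \<and> length \<beta> \<le> m" and y: "y \<in> zball \<Omega> Xs x (\<xi> *\<^sub>R \<delta>)"
      have "\<bar>G x \<delta> l \<beta> y\<bar> \<le> (\<Sum>i<length Ys. \<bar>pG (\<lambda>a. GY x \<delta> i (map \<sigma> a)) (GI i x \<delta> l) \<beta> y\<bar>)"
        unfolding G_def by (rule sum_abs)
      also have "\<dots> \<le> (\<Sum>i<length Ys. 2 ^ m * (\<bar>CY\<bar> * \<bar>CI i\<bar>))"
      proof (rule sum_mono)
        fix i assume i: "i \<in> {..<length Ys}"
        have "\<bar>pG (\<lambda>a. GY x \<delta> i (map \<sigma> a)) (GI i x \<delta> l) \<beta> y\<bar> \<le> 2 ^ length \<beta> * (\<bar>CY\<bar> * \<bar>CI i\<bar>)"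
        proof (rule bound_pG, intro ballI conjI)
          fix ab assume ab: "ab \<in> set (splits \<beta>)"
          have sa: "set (fst ab) \<subseteq> {..<length Xs}" "set (snd ab) \<subseteq> {..<length Xs}"
              "length (fst ab) \<le> m" "length (snd ab) \<le> m"
            using splits_props[OF ab] b by auto
          have "\<bar>GY x \<delta> i (map \<sigma> (fst ab)) y\<bar> \<le> CY"
            using CY UY[OF x] \<delta> i mapS[OF sa(1)] sa(3) incY y by (auto simp: subset_iff)
          then show "\<bar>GY x \<delta> i (map \<sigma> (fst ab)) y\<bar> \<le> \<bar>CY\<bar>" by simp
          have "\<bar>GI i x \<delta> l (snd ab) y\<bar> \<le> CI i"
            using CI UI[OF x] \<delta> i l sa(2,4) incI[of i x \<delta>] y by (auto simp: subset_iff)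
          then show "\<bar>GI i x \<delta> l (snd ab) y\<bar> \<le> \<bar>CI i\<bar>" by simp
        qed
        also have "\<dots> \<le> 2 ^ m * (\<bar>CY\<bar> * \<bar>CI i\<bar>)"
          by (rule mult_right_mono) (use b in \<open>auto intro: power_increasing\<close>)
        finally show "\<bar>pG (\<lambda>a. GY x \<delta> i (map \<sigma> a)) (GI i x \<delta> l) \<beta> y\<bar> \<le> 2 ^ m * (\<bar>CY\<bar> * \<bar>CI i\<bar>)" .
      qed
      finally show "\<bar>G x \<delta> l \<beta> y\<bar> \<le> (\<Sum>i<length Ys. 2 ^ m * (\<bar>CY\<bar> * \<bar>CI i\<bar>))" .
    qed
  qed
  ultimately show ?thesis by (rule controls_vf_intro)
qed

definition w_base where
  "w_base \<Omega> Zs \<rho> U \<xi> \<longleftrightarrow> 0 < \<rho> \<and> open U \<and> 0 \<in> U \<and> U \<subseteq> \<Omega> \<and> 0 < \<xi> \<and> (\<forall>x\<in>U. ode_solvable \<Omega> Zs x (vec \<xi>))"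

definition w_rep where
  "w_rep \<Omega> Zs e W \<rho> U \<xi> c \<longleftrightarrow> (\<forall>x\<in>U. \<forall>\<delta>\<in>unit_cube.
          (\<forall>t\<in>ball 0 \<rho>. \<forall>u\<in>zball \<Omega> Zs x (\<xi> *\<^sub>R \<delta>).
             W (tscale e \<delta> t, u) = (\<Sum>l<length Zs. c x \<delta> l t u *\<^sub>R sfield \<delta> (Zs ! l) u)))"

definition w_H0 where
  "w_H0 \<Omega> Zs \<rho> U \<xi> c H \<longleftrightarrow> (\<forall>x\<in>U. \<forall>\<delta>\<in>unit_cube. \<forall>l<length Zs.
             (\<forall>t\<in>ball 0 \<rho>. \<forall>u\<in>zball \<Omega> Zs x (\<xi> *\<^sub>R \<delta>). H x \<delta> l (\<lambda>_. 0) [] t u = c x \<delta> l t u))"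

definition w_lie where
  "w_lie \<Omega> Zs \<rho> U \<xi> H \<longleftrightarrow> (\<forall>x\<in>U. \<forall>\<delta>\<in>unit_cube. \<forall>l<length Zs.
             (\<forall>\<beta> j. set \<beta> \<subseteq> {..<length Zs} \<and> j < length Zs \<longrightarrow> (\<forall>t\<in>ball 0 \<rho>.
                lie_deriv_on (zball \<Omega> Zs x (\<xi> *\<^sub>R \<delta>)) (sfield \<delta> (Zs ! j))
                  (H x \<delta> l (\<lambda>_. 0) \<beta> t) (H x \<delta> l (\<lambda>_. 0) (j # \<beta>) t))))"

definition w_dt where
  "w_dt \<Omega> Zs \<rho> U \<xi> H \<longleftrightarrow> (\<forall>x\<in>U. \<forall>\<delta>\<in>unit_cube. \<forall>l<length Zs.
             (\<forall>\<alpha> \<beta> i. set \<beta> \<subseteq> {..<length Zs} \<longrightarrow>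
                (\<forall>t\<in>ball 0 \<rho>. \<forall>u\<in>zball \<Omega> Zs x (\<xi> *\<^sub>R \<delta>).
                  ((\<lambda>s. H x \<delta> l \<alpha> \<beta> (t + s *\<^sub>R axis i 1) u) has_real_derivative
                     H x \<delta> l (\<alpha>(i := Suc (\<alpha> i))) \<beta> t u) (at 0))))"

definition w_cont where
  "w_cont \<Omega> Zs \<rho> U \<xi> H \<longleftrightarrow> (\<forall>x\<in>U. \<forall>\<delta>\<in>unit_cube. \<forall>l<length Zs.
             (\<forall>\<alpha> \<beta>. set \<beta> \<subseteq> {..<length Zs} \<longrightarrow>
                continuous_on (ball 0 \<rho> \<times> zball \<Omega> Zs x (\<xi> *\<^sub>R \<delta>))
                  (\<lambda>p. H x \<delta> l \<alpha> \<beta> (fst p) (snd p))))"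

definition w_bnd where
  "w_bnd \<Omega> Zs \<rho> U \<xi> H \<longleftrightarrow> (\<forall>m. \<exists>C. \<forall>x\<in>U. \<forall>\<delta>\<in>unit_cube. \<forall>l<length Zs. \<forall>\<alpha> \<beta>.
          set \<beta> \<subseteq> {..<length Zs} \<and> sum \<alpha> UNIV + length \<beta> \<le> m \<longrightarrow>
          (\<forall>t\<in>ball 0 \<rho>. \<forall>u\<in>zball \<Omega> Zs x (\<xi> *\<^sub>R \<delta>). \<bar>H x \<delta> l \<alpha> \<beta> t u\<bar> \<le> C))"

definition WD where
  "WD \<Omega> Zs e W \<rho> U \<xi> c H \<longleftrightarrow> w_base \<Omega> Zs \<rho> U \<xi> \<and> w_rep \<Omega> Zs e W \<rho> U \<xi> c \<and> w_H0 \<Omega> Zs \<rho> U \<xi> c H \<and>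
     w_lie \<Omega> Zs \<rho> U \<xi> H \<and> w_dt \<Omega> Zs \<rho> U \<xi> H \<and> w_cont \<Omega> Zs \<rho> U \<xi> H \<and> w_bnd \<Omega> Zs \<rho> U \<xi> H"

lemma controls_W_intro:
  fixes Zs :: "((real^'n \<Rightarrow> real^'n) \<times> (real^'v)) list" and e :: "'k::finite \<Rightarrow> real^'v"
    and c :: "real^'n \<Rightarrow> real^'v \<Rightarrow> nat \<Rightarrow> real^'k \<Rightarrow> real^'n \<Rightarrow> real"
    and H :: "real^'n \<Rightarrow> real^'v \<Rightarrow> nat \<Rightarrow> ('k \<Rightarrow> nat) \<Rightarrow> nat list \<Rightarrow> real^'k \<Rightarrow> real^'n \<Rightarrow> real"
  assumes "w_base \<Omega> Zs \<rho> U \<xi>" "w_rep \<Omega> Zs e W \<rho> U \<xi> c" "w_H0 \<Omega> Zs \<rho> U \<xi> c H"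
     "w_lie \<Omega> Zs \<rho> U \<xi> H" "w_dt \<Omega> Zs \<rho> U \<xi> H" "w_cont \<Omega> Zs \<rho> U \<xi> H" "w_bnd \<Omega> Zs \<rho> U \<xi> H"
  shows "controls_W \<Omega> Zs e W"
proof -
  have b: "0 < \<rho>" "open U" "0 \<in> U" "U \<subseteq> \<Omega>" "0 < \<xi>" "\<forall>x\<in>U. ode_solvable \<Omega> Zs x (vec \<xi>)"
    using assms(1) unfolding w_base_def by auto
  show ?thesis
  unfolding controls_W_def
  apply (rule exI[of _ \<rho>], rule exI[of _ U], rule exI[of _ \<xi>])
  apply (intro conjI[OF b(1)] conjI[OF b(2)] conjI[OF b(3)] conjI[OF b(4)] conjI[OF b(5)] conjI[OF b(6)])
  apply (intro exI[of _ c] exI[of _ H] conjI ballI allI impI)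
  subgoal using assms(2) unfolding w_rep_def by blast
  subgoal using assms(3) unfolding w_H0_def by blast
  subgoal using assms(4) unfolding w_lie_def by blast
  subgoal using assms(5) unfolding w_dt_def by blast
  subgoal using assms(6) unfolding w_cont_def by blast
  subgoal using assms(7) unfolding w_bnd_def by blast
  done
qed

lemma controls_W_elim:
  fixes Zs :: "((real^'n \<Rightarrow> real^'n) \<times> (real^'v)) list" and e :: "'k::finite \<Rightarrow> real^'v"
  assumes "controls_W \<Omega> Zs e W"
  shows "\<exists>\<rho> U \<xi> c H. WD \<Omega> Zs e W \<rho> U \<xi> c H"
proof -
  obtain \<rho> U \<xi> where H: "0 < \<rho> \<and> open U \<and> 0 \<in> U \<and> U \<subseteq> \<Omega> \<and> 0 < \<xi> \<and>
     (\<forall>x\<in>U. ode_solvable \<Omega> Zs x (vec \<xi>)) \<and>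
     (\<exists>(c :: real^'n \<Rightarrow> real^'v \<Rightarrow> nat \<Rightarrow> real^'k \<Rightarrow> real^'n \<Rightarrow> real)
        (H :: real^'n \<Rightarrow> real^'v \<Rightarrow> nat \<Rightarrow> ('k \<Rightarrow> nat) \<Rightarrow> nat list \<Rightarrow> real^'k \<Rightarrow> real^'n \<Rightarrow> real).
       (\<forall>x\<in>U. \<forall>\<delta>\<in>unit_cube.
          (\<forall>t\<in>ball 0 \<rho>. \<forall>u\<in>zball \<Omega> Zs x (\<xi> *\<^sub>R \<delta>).
             W (tscale e \<delta> t, u) = (\<Sum>l<length Zs. c x \<delta> l t u *\<^sub>R sfield \<delta> (Zs ! l) u)) \<and>
          (\<forall>l<length Zs.
             (\<forall>t\<in>ball 0 \<rho>. \<forall>u\<in>zball \<Omega> Zs x (\<xi> *\<^sub>R \<delta>). H x \<delta> l (\<lambda>_. 0) [] t u = c x \<delta> l t u) \<and>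
             (\<forall>\<beta> j. set \<beta> \<subseteq> {..<length Zs} \<and> j < length Zs \<longrightarrow> (\<forall>t\<in>ball 0 \<rho>.
                lie_deriv_on (zball \<Omega> Zs x (\<xi> *\<^sub>R \<delta>)) (sfield \<delta> (Zs ! j))
                  (H x \<delta> l (\<lambda>_. 0) \<beta> t) (H x \<delta> l (\<lambda>_. 0) (j # \<beta>) t))) \<and>
             (\<forall>\<alpha> \<beta> i. set \<beta> \<subseteq> {..<length Zs} \<longrightarrow>
                (\<forall>t\<in>ball 0 \<rho>. \<forall>u\<in>zball \<Omega> Zs x (\<xi> *\<^sub>R \<delta>).
                  ((\<lambda>s. H x \<delta> l \<alpha> \<beta> (t + s *\<^sub>R axis i 1) u) has_real_derivative
                     H x \<delta> l (\<alpha>(i := Suc (\<alpha> i))) \<beta> t u) (at 0))) \<and>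
             (\<forall>\<alpha> \<beta>. set \<beta> \<subseteq> {..<length Zs} \<longrightarrow>
                continuous_on (ball 0 \<rho> \<times> zball \<Omega> Zs x (\<xi> *\<^sub>R \<delta>))
                  (\<lambda>p. H x \<delta> l \<alpha> \<beta> (fst p) (snd p))))) \<and>
       (\<forall>m. \<exists>C. \<forall>x\<in>U. \<forall>\<delta>\<in>unit_cube. \<forall>l<length Zs. \<forall>\<alpha> \<beta>.
          set \<beta> \<subseteq> {..<length Zs} \<and> sum \<alpha> UNIV + length \<beta> \<le> m \<longrightarrow>
          (\<forall>t\<in>ball 0 \<rho>. \<forall>u\<in>zball \<Omega> Zs x (\<xi> *\<^sub>R \<delta>). \<bar>H x \<delta> l \<alpha> \<beta> t u\<bar> \<le> C)))"
    using assms unfolding controls_W_def by (elim exE) (rule that)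
  note b = H[THEN conjunct1] H[THEN conjunct2, THEN conjunct1] H[THEN conjunct2, THEN conjunct2, THEN conjunct1]
    H[THEN conjunct2, THEN conjunct2, THEN conjunct2, THEN conjunct1]
    H[THEN conjunct2, THEN conjunct2, THEN conjunct2, THEN conjunct2, THEN conjunct1]
    H[THEN conjunct2, THEN conjunct2, THEN conjunct2, THEN conjunct2, THEN conjunct2, THEN conjunct1]
  note ex = H[THEN conjunct2, THEN conjunct2, THEN conjunct2, THEN conjunct2, THEN conjunct2, THEN conjunct2]
  from ex obtain c H where P: "\<forall>x\<in>U. \<forall>\<delta>\<in>unit_cube.
          (\<forall>t\<in>ball 0 \<rho>. \<forall>u\<in>zball \<Omega> Zs x (\<xi> *\<^sub>R \<delta>).
             W (tscale e \<delta> t, u) = (\<Sum>l<length Zs. c x \<delta> l t u *\<^sub>R sfield \<delta> (Zs ! l) u)) \<and>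
          (\<forall>l<length Zs.
             (\<forall>t\<in>ball 0 \<rho>. \<forall>u\<in>zball \<Omega> Zs x (\<xi> *\<^sub>R \<delta>). H x \<delta> l (\<lambda>_. 0) [] t u = c x \<delta> l t u) \<and>
             (\<forall>\<beta> j. set \<beta> \<subseteq> {..<length Zs} \<and> j < length Zs \<longrightarrow> (\<forall>t\<in>ball 0 \<rho>.
                lie_deriv_on (zball \<Omega> Zs x (\<xi> *\<^sub>R \<delta>)) (sfield \<delta> (Zs ! j))
                  (H x \<delta> l (\<lambda>_. 0) \<beta> t) (H x \<delta> l (\<lambda>_. 0) (j # \<beta>) t))) \<and>
             (\<forall>\<alpha> \<beta> i. set \<beta> \<subseteq> {..<length Zs} \<longrightarrow>
                (\<forall>t\<in>ball 0 \<rho>. \<forall>u\<in>zball \<Omega> Zs x (\<xi> *\<^sub>R \<delta>).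
                  ((\<lambda>s. H x \<delta> l \<alpha> \<beta> (t + s *\<^sub>R axis i 1) u) has_real_derivative
                     H x \<delta> l (\<alpha>(i := Suc (\<alpha> i))) \<beta> t u) (at 0))) \<and>
             (\<forall>\<alpha> \<beta>. set \<beta> \<subseteq> {..<length Zs} \<longrightarrow>
                continuous_on (ball 0 \<rho> \<times> zball \<Omega> Zs x (\<xi> *\<^sub>R \<delta>))
                  (\<lambda>p. H x \<delta> l \<alpha> \<beta> (fst p) (snd p))))"
    and B: "\<forall>m. \<exists>C. \<forall>x\<in>U. \<forall>\<delta>\<in>unit_cube. \<forall>l<length Zs. \<forall>\<alpha> \<beta>.
          set \<beta> \<subseteq> {..<length Zs} \<and> sum \<alpha> UNIV + length \<beta> \<le> m \<longrightarrow>
          (\<forall>t\<in>ball 0 \<rho>. \<forall>u\<in>zball \<Omega> Zs x (\<xi> *\<^sub>R \<delta>). \<bar>H x \<delta> l \<alpha> \<beta> t u\<bar> \<le> C)"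
    by (elim exE conjE) (rule that)
  have "w_base \<Omega> Zs \<rho> U \<xi>" using b unfolding w_base_def by blast
  moreover have "w_rep \<Omega> Zs e W \<rho> U \<xi> c" unfolding w_rep_def using P by blast
  moreover have "w_H0 \<Omega> Zs \<rho> U \<xi> c H" unfolding w_H0_def using P by blast
  moreover have "w_lie \<Omega> Zs \<rho> U \<xi> H" unfolding w_lie_def using P by blast
  moreover have "w_dt \<Omega> Zs \<rho> U \<xi> H" unfolding w_dt_def using P by blast
  moreover have "w_cont \<Omega> Zs \<rho> U \<xi> H" unfolding w_cont_def using P by blast
  moreover have "w_bnd \<Omega> Zs \<rho> U \<xi> H" unfolding w_bnd_def using B by blast
  ultimately show ?thesis unfolding WD_def by blast
qed

lemma part2:
  fixes Xs Ys :: "((real^'n \<Rightarrow> real^'n) \<times> (real^'v)) list" and \<sigma> :: "nat \<Rightarrow> nat"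
    and e :: "'k::finite \<Rightarrow> real^'v"
    and HY :: "real^'n \<Rightarrow> real^'v \<Rightarrow> nat \<Rightarrow> ('k \<Rightarrow> nat) \<Rightarrow> nat list \<Rightarrow> real^'k \<Rightarrow> real^'n \<Rightarrow> real"
    and cY :: "real^'n \<Rightarrow> real^'v \<Rightarrow> nat \<Rightarrow> real^'k \<Rightarrow> real^'n \<Rightarrow> real"
  assumes ne: "Ys \<noteq> []"
    and \<sigma>: "\<forall>l<length Xs. \<sigma> l < length Ys \<and> Ys ! \<sigma> l = Xs ! l"
    and deg: "\<forall>l<length Xs. is_degree (snd (Xs!l))"
    and Y: "WD \<Omega> Ys e W \<rho> UY \<xi>Y cY HY"
    and X: "\<forall>i<length Ys. VFD \<Omega> Xs (fst (Ys!i)) (snd (Ys!i)) (UI i) (\<xi>I i) (cI i) (GI i)"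
  shows "controls_W \<Omega> Xs e W"
proof -
  have baseY: "0 < \<rho>" "open UY" "0 \<in> UY" "UY \<subseteq> \<Omega>" "0 < \<xi>Y" using Y unfolding WD_def w_base_def by auto
  have baseI: "open (UI i)" "0 \<in> UI i" "0 < \<xi>I i" "\<forall>x\<in>UI i. ode_solvable \<Omega> Xs x (vec (\<xi>I i))"
    if "i < length Ys" for i using X that unfolding VFD_def vf_base_def by auto
  have Yrep: "\<And>x \<delta> t u. x \<in> UY \<Longrightarrow> \<delta> \<in> unit_cube \<Longrightarrow> t \<in> ball 0 \<rho> \<Longrightarrow> u \<in> zball \<Omega> Ys x (\<xi>Y *\<^sub>R \<delta>) \<Longrightarrow>
      W (tscale e \<delta> t, u) = (\<Sum>i<length Ys. cY x \<delta> i t u *\<^sub>R sfield \<delta> (Ys ! i) u)"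
    using Y unfolding WD_def w_rep_def by blast
  have Irep: "\<And>i x \<delta> y. i < length Ys \<Longrightarrow> x \<in> UI i \<Longrightarrow> \<delta> \<in> unit_cube \<Longrightarrow> y \<in> zball \<Omega> Xs x (\<xi>I i *\<^sub>R \<delta>) \<Longrightarrow>
      degpow \<delta> (snd (Ys!i)) *\<^sub>R fst (Ys!i) y = (\<Sum>l<length Xs. cI i x \<delta> l y *\<^sub>R sfield \<delta> (Xs ! l) y)"
    using X unfolding VFD_def vf_rep_def by blast
  have YH0: "\<And>x \<delta> i t u. x \<in> UY \<Longrightarrow> \<delta> \<in> unit_cube \<Longrightarrow> i < length Ys \<Longrightarrow> t \<in> ball 0 \<rho> \<Longrightarrow>
      u \<in> zball \<Omega> Ys x (\<xi>Y *\<^sub>R \<delta>) \<Longrightarrow> HY x \<delta> i (\<lambda>_. 0) [] t u = cY x \<delta> i t u"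
    using Y unfolding WD_def w_H0_def by blast
  have IG0: "\<And>i x \<delta> l y. i < length Ys \<Longrightarrow> x \<in> UI i \<Longrightarrow> \<delta> \<in> unit_cube \<Longrightarrow> l < length Xs \<Longrightarrow>
      y \<in> zball \<Omega> Xs x (\<xi>I i *\<^sub>R \<delta>) \<Longrightarrow> GI i x \<delta> l [] y = cI i x \<delta> l y"
    using X unfolding VFD_def vf_G0_def by blast
  have Ylie: "\<And>x \<delta> i \<beta> j t. x \<in> UY \<Longrightarrow> \<delta> \<in> unit_cube \<Longrightarrow> i < length Ys \<Longrightarrow> set \<beta> \<subseteq> {..<length Ys} \<Longrightarrow> j < length Ys \<Longrightarrow>
      t \<in> ball 0 \<rho> \<Longrightarrow>
      lie_deriv_on (zball \<Omega> Ys x (\<xi>Y *\<^sub>R \<delta>)) (sfield \<delta> (Ys ! j)) (HY x \<delta> i (\<lambda>_. 0) \<beta> t) (HY x \<delta> i (\<lambda>_. 0) (j # \<beta>) t)"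
    using Y unfolding WD_def w_lie_def by blast
  have Ilie: "\<And>i x \<delta> l \<beta> j. i < length Ys \<Longrightarrow> x \<in> UI i \<Longrightarrow> \<delta> \<in> unit_cube \<Longrightarrow> l < length Xs \<Longrightarrow>
      set \<beta> \<subseteq> {..<length Xs} \<Longrightarrow> j < length Xs \<Longrightarrow>
      lie_deriv_on (zball \<Omega> Xs x (\<xi>I i *\<^sub>R \<delta>)) (sfield \<delta> (Xs ! j)) (GI i x \<delta> l \<beta>) (GI i x \<delta> l (j # \<beta>))"
    using X unfolding VFD_def vf_lie_def by blast
  have Ydt: "\<And>x \<delta> i \<alpha> \<beta> k t u. x \<in> UY \<Longrightarrow> \<delta> \<in> unit_cube \<Longrightarrow> i < length Ys \<Longrightarrow> set \<beta> \<subseteq> {..<length Ys} \<Longrightarrow>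
      t \<in> ball 0 \<rho> \<Longrightarrow> u \<in> zball \<Omega> Ys x (\<xi>Y *\<^sub>R \<delta>) \<Longrightarrow>
      ((\<lambda>s. HY x \<delta> i \<alpha> \<beta> (t + s *\<^sub>R axis k 1) u) has_real_derivative HY x \<delta> i (\<alpha>(k := Suc (\<alpha> k))) \<beta> t u) (at 0)"
    using Y unfolding WD_def w_dt_def by blast
  have Ycont: "\<And>x \<delta> i \<alpha> \<beta>. x \<in> UY \<Longrightarrow> \<delta> \<in> unit_cube \<Longrightarrow> i < length Ys \<Longrightarrow> set \<beta> \<subseteq> {..<length Ys} \<Longrightarrow>
      continuous_on (ball 0 \<rho> \<times> zball \<Omega> Ys x (\<xi>Y *\<^sub>R \<delta>)) (\<lambda>p. HY x \<delta> i \<alpha> \<beta> (fst p) (snd p))"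
    using Y unfolding WD_def w_cont_def by blast
  have Icont: "\<And>i x \<delta> l \<beta>. i < length Ys \<Longrightarrow> x \<in> UI i \<Longrightarrow> \<delta> \<in> unit_cube \<Longrightarrow> l < length Xs \<Longrightarrow>
      set \<beta> \<subseteq> {..<length Xs} \<Longrightarrow> continuous_on (zball \<Omega> Xs x (\<xi>I i *\<^sub>R \<delta>)) (GI i x \<delta> l \<beta>)"
    using X unfolding VFD_def vf_cont_def by blast
  have Ybnd: "w_bnd \<Omega> Ys \<rho> UY \<xi>Y HY" using Y unfolding WD_def by blast
  have Ibnd: "\<And>i. i < length Ys \<Longrightarrow> vf_bnd \<Omega> Xs (UI i) (\<xi>I i) (GI i)" using X unfolding VFD_def by blast

  obtain \<xi> where \<xi>p: "0 < \<xi>"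
    and inc: "\<forall>x \<delta>. zball \<Omega> Xs x (\<xi> *\<^sub>R \<delta>) \<subseteq> zball \<Omega> Ys x (\<xi>Y *\<^sub>R \<delta>) \<and>
          (\<forall>i<length Ys. zball \<Omega> Xs x (\<xi> *\<^sub>R \<delta>) \<subseteq> zball \<Omega> Xs x (\<xi>I i *\<^sub>R \<delta>))"
    and solv: "\<forall>i<length Ys. \<forall>x. ode_solvable \<Omega> Xs x (vec (\<xi>I i)) \<longrightarrow> ode_solvable \<Omega> Xs x (vec \<xi>)"
    using common_scale[OF \<sigma> deg baseY(5), of \<xi>I \<Omega>] baseI(3) by blast
  have incY: "zball \<Omega> Xs x (\<xi> *\<^sub>R \<delta>) \<subseteq> zball \<Omega> Ys x (\<xi>Y *\<^sub>R \<delta>)" for x \<delta> using inc by blast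
  have incI: "i < length Ys \<Longrightarrow> zball \<Omega> Xs x (\<xi> *\<^sub>R \<delta>) \<subseteq> zball \<Omega> Xs x (\<xi>I i *\<^sub>R \<delta>)" for x \<delta> i using inc by blast

  define U where "U = UY \<inter> (\<Inter>i\<in>{..<length Ys}. UI i)"
  define c where "c x \<delta> l t u = (\<Sum>i<length Ys. cY x \<delta> i t u * cI i x \<delta> l u)" for x \<delta> l t u
  define H where "H x \<delta> l \<alpha> \<beta> t u = (\<Sum>i<length Ys. pG (\<lambda>a u. HY x \<delta> i \<alpha> (map \<sigma> a) t u) (GI i x \<delta> l) \<beta> u)"
    for x \<delta> l \<alpha> \<beta> t u
  have UY: "x \<in> U \<Longrightarrow> x \<in> UY" and UI: "x \<in> U \<Longrightarrow> i < length Ys \<Longrightarrow> x \<in> UI i" for x i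
    unfolding U_def by auto
  have lenY: "0 < length Ys" using ne by simp
  have mapS: "set \<beta> \<subseteq> {..<length Xs} \<Longrightarrow> set (map \<sigma> \<beta>) \<subseteq> {..<length Ys}" for \<beta>
    using \<sigma> by auto

  have "w_base \<Omega> Xs \<rho> U \<xi>"
    unfolding w_base_def
  proof (intro conjI ballI)
    show "0 < \<rho>" by (rule baseY(1))
    have "open (\<Inter>i\<in>{..<length Ys}. UI i)" by (rule open_INT) (use baseI in auto)
    then show "open U" unfolding U_def using baseY by (intro open_Int) auto
    show "0 \<in> U" unfolding U_def using baseY baseI by auto
    show "U \<subseteq> \<Omega>" unfolding U_def using baseY by auto
    show "0 < \<xi>" by (rule \<xi>p)
    fix x assume "x \<in> U"
    then show "ode_solvable \<Omega> Xs x (vec \<xi>)" using solv baseI(4)[OF lenY] UI[OF _ lenY] lenY by blast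
  qed
  moreover have "w_rep \<Omega> Xs e W \<rho> U \<xi> c"
    unfolding w_rep_def
  proof (intro ballI)
    fix x and \<delta> :: "real^'v" and t :: "real^'k" and y assume x: "x \<in> U" and \<delta>: "\<delta> \<in> unit_cube" and t: "t \<in> ball 0 \<rho>"
      and y: "y \<in> zball \<Omega> Xs x (\<xi> *\<^sub>R \<delta>)"
    have "W (tscale e \<delta> t, y) = (\<Sum>i<length Ys. cY x \<delta> i t y *\<^sub>R sfield \<delta> (Ys ! i) y)"
      using Yrep[OF UY[OF x] \<delta> t] incY y by blast
    also have "\<dots> = (\<Sum>i<length Ys. cY x \<delta> i t y *\<^sub>R (\<Sum>l<length Xs. cI i x \<delta> l y *\<^sub>R sfield \<delta> (Xs ! l) y))"
    proof (rule sum.cong)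
      fix i assume i: "i \<in> {..<length Ys}"
      have "sfield \<delta> (Ys ! i) y = degpow \<delta> (snd (Ys!i)) *\<^sub>R fst (Ys!i) y" by (simp add: sfield_def)
      also have "\<dots> = (\<Sum>l<length Xs. cI i x \<delta> l y *\<^sub>R sfield \<delta> (Xs ! l) y)"
        using Irep[of i x \<delta> y] i UI[OF x] \<delta> incI y by blast
      finally show "cY x \<delta> i t y *\<^sub>R sfield \<delta> (Ys ! i) y = cY x \<delta> i t y *\<^sub>R (\<Sum>l<length Xs. cI i x \<delta> l y *\<^sub>R sfield \<delta> (Xs ! l) y)"
        by simp
    qed simp
    also have "\<dots> = (\<Sum>i<length Ys. \<Sum>l<length Xs. (cY x \<delta> i t y * cI i x \<delta> l y) *\<^sub>R sfield \<delta> (Xs ! l) y)"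
      by (simp add: scaleR_sum_right)
    also have "\<dots> = (\<Sum>l<length Xs. \<Sum>i<length Ys. (cY x \<delta> i t y * cI i x \<delta> l y) *\<^sub>R sfield \<delta> (Xs ! l) y)"
      by (rule sum.swap)
    also have "\<dots> = (\<Sum>l<length Xs. c x \<delta> l t y *\<^sub>R sfield \<delta> (Xs ! l) y)"
      by (simp add: c_def scaleR_sum_left)
    finally show "W (tscale e \<delta> t, y) = (\<Sum>l<length Xs. c x \<delta> l t y *\<^sub>R sfield \<delta> (Xs ! l) y)" .
  qed
  moreover have "w_H0 \<Omega> Xs \<rho> U \<xi> c H"
    unfolding w_H0_def
  proof (intro ballI allI impI)
    fix x and \<delta> :: "real^'v" and l and t :: "real^'k" and y assume x: "x \<in> U" and \<delta>: "\<delta> \<in> unit_cube" and l: "l < length Xs"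
      and t: "t \<in> ball 0 \<rho>" and y: "y \<in> zball \<Omega> Xs x (\<xi> *\<^sub>R \<delta>)"
    show "H x \<delta> l (\<lambda>_. 0) [] t y = c x \<delta> l t y"
      unfolding H_def c_def pG_Nil list.map
    proof (rule sum.cong)
      fix i assume i: "i \<in> {..<length Ys}"
      have yY: "y \<in> zball \<Omega> Ys x (\<xi>Y *\<^sub>R \<delta>)" using incY y by blast
      have yI: "y \<in> zball \<Omega> Xs x (\<xi>I i *\<^sub>R \<delta>)" using incI y i by blast
      have "HY x \<delta> i (\<lambda>_. 0) [] t y = cY x \<delta> i t y" using YH0[OF UY[OF x] \<delta> _ t yY] i by simp
      moreover have "GI i x \<delta> l [] y = cI i x \<delta> l y" using IG0[OF _ UI[OF x] \<delta> l yI] i by simp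
      ultimately show "HY x \<delta> i (\<lambda>_. 0) [] t y * GI i x \<delta> l [] y = cY x \<delta> i t y * cI i x \<delta> l y" by simp
    qed simp
  qed
  moreover have "w_lie \<Omega> Xs \<rho> U \<xi> H"
    unfolding w_lie_def
  proof (intro ballI allI impI)
    fix x and \<delta> :: "real^'v" and l \<beta> j and t :: "real^'k" assume x: "x \<in> U" and \<delta>: "\<delta> \<in> unit_cube" and l: "l < length Xs"
      and bj: "set \<beta> \<subseteq> {..<length Xs} \<and> j < length Xs" and t: "t \<in> ball 0 \<rho>"
    have Hf: "H x \<delta> l (\<lambda>_. 0) \<gamma> t = (\<lambda>y. \<Sum>i<length Ys. pG (\<lambda>a u. HY x \<delta> i (\<lambda>_. 0) (map \<sigma> a) t u) (GI i x \<delta> l) \<gamma> y)" for \<gamma>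
      by (rule ext) (simp add: H_def)
    show "lie_deriv_on (zball \<Omega> Xs x (\<xi> *\<^sub>R \<delta>)) (sfield \<delta> (Xs ! j)) (H x \<delta> l (\<lambda>_. 0) \<beta> t) (H x \<delta> l (\<lambda>_. 0) (j # \<beta>) t)"
      unfolding Hf
    proof (rule lie_sum, simp, intro ballI lie_pG conjI)
      fix i ab assume i: "i \<in> {..<length Ys}" and ab: "ab \<in> set (splits \<beta>)"
      have sa: "set (fst ab) \<subseteq> {..<length Xs}" "set (snd ab) \<subseteq> {..<length Xs}"
        using splits_props[OF ab] bj by auto
      have "lie_deriv_on (zball \<Omega> Ys x (\<xi>Y *\<^sub>R \<delta>)) (sfield \<delta> (Ys ! \<sigma> j))
          (HY x \<delta> i (\<lambda>_. 0) (map \<sigma> (fst ab)) t) (HY x \<delta> i (\<lambda>_. 0) (\<sigma> j # map \<sigma> (fst ab)) t)"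
        by (rule Ylie) (use UY[OF x] \<delta> i mapS[OF sa(1)] \<sigma> bj t in auto)
      then show "lie_deriv_on (zball \<Omega> Xs x (\<xi> *\<^sub>R \<delta>)) (sfield \<delta> (Xs ! j))
          ((\<lambda>a u. HY x \<delta> i (\<lambda>_. 0) (map \<sigma> a) t u) (fst ab)) ((\<lambda>a u. HY x \<delta> i (\<lambda>_. 0) (map \<sigma> a) t u) (j # fst ab))"
        using \<sigma> bj by (auto intro: lie_mono[OF incY])
      have "lie_deriv_on (zball \<Omega> Xs x (\<xi>I i *\<^sub>R \<delta>)) (sfield \<delta> (Xs ! j))
          (GI i x \<delta> l (snd ab)) (GI i x \<delta> l (j # snd ab))"
        by (rule Ilie) (use UI[OF x] \<delta> i l sa bj in auto)
      then show "lie_deriv_on (zball \<Omega> Xs x (\<xi> *\<^sub>R \<delta>)) (sfield \<delta> (Xs ! j))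
          (GI i x \<delta> l (snd ab)) (GI i x \<delta> l (j # snd ab))"
        using i by (auto intro: lie_mono[OF incI])
    qed
  qed
  moreover have "w_dt \<Omega> Xs \<rho> U \<xi> H"
    unfolding w_dt_def
  proof (intro ballI allI impI)
    fix x and \<delta> :: "real^'v" and l \<alpha> \<beta> k and t :: "real^'k" and y assume x: "x \<in> U" and \<delta>: "\<delta> \<in> unit_cube" and l: "l < length Xs"
      and b: "set \<beta> \<subseteq> {..<length Xs}" and t: "t \<in> ball 0 \<rho>" and y: "y \<in> zball \<Omega> Xs x (\<xi> *\<^sub>R \<delta>)"
    have "((\<lambda>s. \<Sum>i<length Ys. pG (\<lambda>a _. HY x \<delta> i \<alpha> (map \<sigma> a) (t + s *\<^sub>R axis k 1) y) (GI i x \<delta> l) \<beta> y)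
        has_real_derivative (\<Sum>i<length Ys. pG (\<lambda>a _. HY x \<delta> i (\<alpha>(k := Suc (\<alpha> k))) (map \<sigma> a) t y) (GI i x \<delta> l) \<beta> y)) (at 0)"
    proof (rule DERIV_sum, rule deriv_pG, intro ballI)
      fix i ab assume i: "i \<in> {..<length Ys}" and ab: "ab \<in> set (splits \<beta>)"
      have sa: "set (fst ab) \<subseteq> {..<length Xs}" using splits_props[OF ab] b by auto
      show "((\<lambda>s. HY x \<delta> i \<alpha> (map \<sigma> (fst ab)) (t + s *\<^sub>R axis k 1) y) has_real_derivative
          HY x \<delta> i (\<alpha>(k := Suc (\<alpha> k))) (map \<sigma> (fst ab)) t y) (at 0)"
        by (rule Ydt) (use UY[OF x] \<delta> i mapS[OF sa] t incY y in \<open>auto simp: subset_iff\<close>)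
    qed
    then show "((\<lambda>s. H x \<delta> l \<alpha> \<beta> (t + s *\<^sub>R axis k 1) y) has_real_derivative H x \<delta> l (\<alpha>(k := Suc (\<alpha> k))) \<beta> t y) (at 0)"
      by (simp add: H_def pG_def)
  qed
  moreover have "w_cont \<Omega> Xs \<rho> U \<xi> H"
    unfolding w_cont_def
  proof (intro ballI allI impI)
    fix x and \<delta> :: "real^'v" and l \<alpha> \<beta> assume x: "x \<in> U" and \<delta>: "\<delta> \<in> unit_cube" and l: "l < length Xs"
      and b: "set \<beta> \<subseteq> {..<length Xs}"
    have Hf: "(\<lambda>p. H x \<delta> l \<alpha> \<beta> (fst p) (snd p)) = (\<lambda>p. \<Sum>i<length Ys.
        pG (\<lambda>a p. HY x \<delta> i \<alpha> (map \<sigma> a) (fst p) (snd p)) (\<lambda>b p. GI i x \<delta> l b (snd p)) \<beta> p)"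
      by (rule ext) (simp add: H_def pG_def)
    have sub: "ball 0 \<rho> \<times> zball \<Omega> Xs x (\<xi> *\<^sub>R \<delta>) \<subseteq> ball 0 \<rho> \<times> zball \<Omega> Ys x (\<xi>Y *\<^sub>R \<delta>)"
      using incY by auto
    show "continuous_on (ball 0 \<rho> \<times> zball \<Omega> Xs x (\<xi> *\<^sub>R \<delta>)) (\<lambda>p. H x \<delta> l \<alpha> \<beta> (fst p) (snd p))"
      unfolding Hf
    proof (rule continuous_on_sum, intro cont_pG ballI conjI)
      fix i ab assume i: "i \<in> {..<length Ys}" and ab: "ab \<in> set (splits \<beta>)"
      have sa: "set (fst ab) \<subseteq> {..<length Xs}" "set (snd ab) \<subseteq> {..<length Xs}"
        using splits_props[OF ab] b by auto
      show "continuous_on (ball 0 \<rho> \<times> zball \<Omega> Xs x (\<xi> *\<^sub>R \<delta>)) ((\<lambda>a p. HY x \<delta> i \<alpha> (map \<sigma> a) (fst p) (snd p)) (fst ab))"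
        using continuous_on_subset[OF Ycont[OF UY[OF x] \<delta> _ mapS[OF sa(1)]] sub] i by auto
      have ci: "continuous_on (zball \<Omega> Xs x (\<xi> *\<^sub>R \<delta>)) (GI i x \<delta> l (snd ab))"
        using Icont[OF _ UI[OF x] \<delta> l sa(2)] i by (auto intro: continuous_on_subset[OF _ incI])
      show "continuous_on (ball 0 \<rho> \<times> zball \<Omega> Xs x (\<xi> *\<^sub>R \<delta>)) ((\<lambda>b p. GI i x \<delta> l b (snd p)) (snd ab))"
      proof -
        have cs: "continuous_on (ball 0 \<rho> \<times> zball \<Omega> Xs x (\<xi> *\<^sub>R \<delta>)) (\<lambda>p. snd p)"
          by (intro continuous_intros)
        have "snd ` (ball 0 \<rho> \<times> zball \<Omega> Xs x (\<xi> *\<^sub>R \<delta>)) \<subseteq> zball \<Omega> Xs x (\<xi> *\<^sub>R \<delta>)" by auto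
        from continuous_on_compose2[OF ci cs this] show ?thesis by simp
      qed
    qed
  qed
  moreover have "w_bnd \<Omega> Xs \<rho> U \<xi> H"
    unfolding w_bnd_def
  proof
    fix m
    obtain CY where CY: "\<forall>x\<in>UY. \<forall>\<delta>\<in>unit_cube. \<forall>i<length Ys. \<forall>\<alpha> \<beta>.
          set \<beta> \<subseteq> {..<length Ys} \<and> sum \<alpha> UNIV + length \<beta> \<le> m \<longrightarrow>
          (\<forall>t\<in>ball 0 \<rho>. \<forall>u\<in>zball \<Omega> Ys x (\<xi>Y *\<^sub>R \<delta>). \<bar>HY x \<delta> i \<alpha> \<beta> t u\<bar> \<le> CY)"
      using Ybnd unfolding w_bnd_def by blast
    have "\<forall>i. \<exists>C. i < length Ys \<longrightarrow> (\<forall>x\<in>UI i. \<forall>\<delta>\<in>unit_cube. \<forall>l<length Xs. \<forall>\<beta>.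
          set \<beta> \<subseteq> {..<length Xs} \<and> length \<beta> \<le> m \<longrightarrow>
          (\<forall>y\<in>zball \<Omega> Xs x (\<xi>I i *\<^sub>R \<delta>). \<bar>GI i x \<delta> l \<beta> y\<bar> \<le> C))"
      using Ibnd unfolding vf_bnd_def by blast
    then obtain CI where CI: "\<forall>i. i < length Ys \<longrightarrow> (\<forall>x\<in>UI i. \<forall>\<delta>\<in>unit_cube. \<forall>l<length Xs. \<forall>\<beta>.
          set \<beta> \<subseteq> {..<length Xs} \<and> length \<beta> \<le> m \<longrightarrow>
          (\<forall>y\<in>zball \<Omega> Xs x (\<xi>I i *\<^sub>R \<delta>). \<bar>GI i x \<delta> l \<beta> y\<bar> \<le> CI i))"
      by (metis choice)
    show "\<exists>C. \<forall>x\<in>U. \<forall>\<delta>\<in>unit_cube. \<forall>l<length Xs. \<forall>(\<alpha>::'k\<Rightarrow>nat) \<beta>.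
          set \<beta> \<subseteq> {..<length Xs} \<and> sum \<alpha> UNIV + length \<beta> \<le> m \<longrightarrow>
          (\<forall>t\<in>ball 0 \<rho>. \<forall>u\<in>zball \<Omega> Xs x (\<xi> *\<^sub>R \<delta>). \<bar>H x \<delta> l \<alpha> \<beta> t u\<bar> \<le> C)"
    proof (intro exI[of _ "\<Sum>i<length Ys. 2 ^ m * (\<bar>CY\<bar> * \<bar>CI i\<bar>)"] ballI allI impI)
      fix x and \<delta> :: "real^'v" and l and \<alpha> :: "'k \<Rightarrow> nat" and \<beta> and t :: "real^'k" and y assume x: "x \<in> U" and \<delta>: "\<delta> \<in> unit_cube" and l: "l < length Xs"
        and b: "set \<beta> \<subseteq> {..<length Xs} \<and> sum \<alpha> UNIV + length \<beta> \<le> m" and t: "t \<in> ball 0 \<rho>"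
        and y: "y \<in> zball \<Omega> Xs x (\<xi> *\<^sub>R \<delta>)"
      have "\<bar>H x \<delta> l \<alpha> \<beta> t y\<bar> \<le> (\<Sum>i<length Ys. \<bar>pG (\<lambda>a u. HY x \<delta> i \<alpha> (map \<sigma> a) t u) (GI i x \<delta> l) \<beta> y\<bar>)"
        unfolding H_def by (rule sum_abs)
      also have "\<dots> \<le> (\<Sum>i<length Ys. 2 ^ m * (\<bar>CY\<bar> * \<bar>CI i\<bar>))"
      proof (rule sum_mono)
        fix i assume i: "i \<in> {..<length Ys}"
        have "\<bar>pG (\<lambda>a u. HY x \<delta> i \<alpha> (map \<sigma> a) t u) (GI i x \<delta> l) \<beta> y\<bar> \<le> 2 ^ length \<beta> * (\<bar>CY\<bar> * \<bar>CI i\<bar>)"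
        proof (rule bound_pG, intro ballI conjI)
          fix ab assume ab: "ab \<in> set (splits \<beta>)"
          have sa: "set (fst ab) \<subseteq> {..<length Xs}" "set (snd ab) \<subseteq> {..<length Xs}"
              "sum \<alpha> UNIV + length (map \<sigma> (fst ab)) \<le> m" "length (snd ab) \<le> m"
            using splits_props[OF ab] b by auto
          have "\<bar>HY x \<delta> i \<alpha> (map \<sigma> (fst ab)) t y\<bar> \<le> CY"
            using CY UY[OF x] \<delta> i mapS[OF sa(1)] sa(3) t incY y by (auto simp: subset_iff)
          then show "\<bar>HY x \<delta> i \<alpha> (map \<sigma> (fst ab)) t y\<bar> \<le> \<bar>CY\<bar>" by simp
          have "\<bar>GI i x \<delta> l (snd ab) y\<bar> \<le> CI i"
            using CI UI[OF x] \<delta> i l sa(2,4) incI[of i x \<delta>] y by (auto simp: subset_iff)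
          then show "\<bar>GI i x \<delta> l (snd ab) y\<bar> \<le> \<bar>CI i\<bar>" by simp
        qed
        also have "\<dots> \<le> 2 ^ m * (\<bar>CY\<bar> * \<bar>CI i\<bar>)"
          by (rule mult_right_mono) (use b in \<open>auto intro: power_increasing\<close>)
        finally show "\<bar>pG (\<lambda>a u. HY x \<delta> i \<alpha> (map \<sigma> a) t u) (GI i x \<delta> l) \<beta> y\<bar> \<le> 2 ^ m * (\<bar>CY\<bar> * \<bar>CI i\<bar>)" .
      qed
      finally show "\<bar>H x \<delta> l \<alpha> \<beta> t y\<bar> \<le> (\<Sum>i<length Ys. 2 ^ m * (\<bar>CY\<bar> * \<bar>CI i\<bar>))" .
    qed
  qed
  ultimately show ?thesis by (rule controls_W_intro)
qed

theorem lemma7p2: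
  fixes \<Omega> :: "(real^'n) set"
    and X0 :: "real^'n \<Rightarrow> real^'n" and d0 :: "real^'v"
    and Xs Ys :: "((real^'n \<Rightarrow> real^'n) \<times> (real^'v)) list"
    and e :: "'k::finite \<Rightarrow> real^'v"
    and W :: "(real^'k) \<times> (real^'n) \<Rightarrow> real^'n" and V :: "((real^'k) \<times> (real^'n)) set"
  assumes "open \<Omega>" and "0 \<in> \<Omega>"
    and "smooth_on \<Omega> X0" and "is_degree d0"
    and "\<forall>(Z, D)\<in>set Xs \<union> set Ys. smooth_on \<Omega> Z \<and> is_degree D"
    and "\<forall>j \<mu>. 0 \<le> e j $ \<mu>"
    and "open V" and "(0, 0) \<in> V" and "smooth_on V W"
    and "\<forall>x. (0, x) \<in> V \<longrightarrow> W (0, x) = 0"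
    and "set Xs \<subseteq> set Ys"
  shows "(controls_vf \<Omega> Ys X0 d0 \<and> (\<forall>(Z, D)\<in>set Ys. controls_vf \<Omega> Xs Z D)
            \<longrightarrow> controls_vf \<Omega> Xs X0 d0) \<and>
         (controls_W \<Omega> Ys e W \<and> (\<forall>(Z, D)\<in>set Ys. controls_vf \<Omega> Xs Z D)
            \<longrightarrow> controls_W \<Omega> Xs e W)"
proof (cases "Ys = []")
  case True
  then have "Xs = Ys" using assms(11) by simp
  then show ?thesis by simp
next
  case ne: False
  define \<sigma> where "\<sigma> l = (SOME i. i < length Ys \<and> Ys ! i = Xs ! l)" for l
  have \<sigma>: "\<forall>l<length Xs. \<sigma> l < length Ys \<and> Ys ! \<sigma> l = Xs ! l"
  proof (intro allI impI)
    fix l assume "l < length Xs"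
    then have "Xs ! l \<in> set Ys" using assms(11) nth_mem by blast
    then have "\<exists>i. i < length Ys \<and> Ys ! i = Xs ! l" by (simp add: in_set_conv_nth)
    then show "\<sigma> l < length Ys \<and> Ys ! \<sigma> l = Xs ! l" unfolding \<sigma>_def by (rule someI_ex)
  qed
  have deg: "\<forall>l<length Xs. is_degree (snd (Xs!l))"
  proof (intro allI impI)
    fix l assume "l < length Xs"
    then have "Xs ! l \<in> set Xs \<union> set Ys" by simp
    then have "case Xs ! l of (Z, D) \<Rightarrow> smooth_on \<Omega> Z \<and> is_degree D" by (rule bspec[OF assms(5)])
    then show "is_degree (snd (Xs!l))" by (simp add: case_prod_beta)
  qed
  have Q: "\<forall>i. \<exists>q. i < length Ys \<longrightarrow> VFD \<Omega> Xs (fst (Ys!i)) (snd (Ys!i)) (fst q) (fst (snd q)) (fst (snd (snd q))) (snd (snd (snd q)))"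
    if h: "\<forall>(Z, D)\<in>set Ys. controls_vf \<Omega> Xs Z D"
  proof
    fix i
    show "\<exists>q. i < length Ys \<longrightarrow> VFD \<Omega> Xs (fst (Ys!i)) (snd (Ys!i)) (fst q) (fst (snd q)) (fst (snd (snd q))) (snd (snd (snd q)))"
    proof (cases "i < length Ys")
      case True
      then have "Ys ! i \<in> set Ys" by simp
      then have "case Ys ! i of (Z, D) \<Rightarrow> controls_vf \<Omega> Xs Z D" by (rule bspec[OF h])
      then have "controls_vf \<Omega> Xs (fst (Ys!i)) (snd (Ys!i))" by (simp add: case_prod_beta)
      then obtain U \<xi> c G where "VFD \<Omega> Xs (fst (Ys!i)) (snd (Ys!i)) U \<xi> c G"
        using controls_vf_elim by blast
      then show ?thesis by (intro exI[of _ "(U, \<xi>, c, G)"]) simp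
    qed simp
  qed
  have XD: "\<exists>UI \<xi>I cI GI. \<forall>i<length Ys. VFD \<Omega> Xs (fst (Ys!i)) (snd (Ys!i)) (UI i) (\<xi>I i) (cI i) (GI i)"
    if h: "\<forall>(Z, D)\<in>set Ys. controls_vf \<Omega> Xs Z D"
  proof -
    obtain f where f: "\<forall>i. i < length Ys \<longrightarrow> VFD \<Omega> Xs (fst (Ys!i)) (snd (Ys!i)) (fst (f i)) (fst (snd (f i))) (fst (snd (snd (f i)))) (snd (snd (snd (f i))))"
      using choice[OF Q[OF h]] by (elim exE)
    show ?thesis
      by (rule exI[of _ "\<lambda>i. fst (f i)"], rule exI[of _ "\<lambda>i. fst (snd (f i))"],
          rule exI[of _ "\<lambda>i. fst (snd (snd (f i)))"], rule exI[of _ "\<lambda>i. snd (snd (snd (f i)))"]) (use f in auto)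
  qed
  show ?thesis
  proof (intro conjI impI)
    assume h: "controls_vf \<Omega> Ys X0 d0 \<and> (\<forall>(Z, D)\<in>set Ys. controls_vf \<Omega> Xs Z D)"
    obtain UY \<xi>Y cY GY where Y: "VFD \<Omega> Ys X0 d0 UY \<xi>Y cY GY" using controls_vf_elim h by blast
    obtain UI \<xi>I cI GI where X: "\<forall>i<length Ys. VFD \<Omega> Xs (fst (Ys!i)) (snd (Ys!i)) (UI i) (\<xi>I i) (cI i) (GI i)"
      using XD h by blast
    show "controls_vf \<Omega> Xs X0 d0" by (rule part1[OF ne \<sigma> deg Y X])
  next
    assume h: "controls_W \<Omega> Ys e W \<and> (\<forall>(Z, D)\<in>set Ys. controls_vf \<Omega> Xs Z D)"
    obtain \<rho> UY \<xi>Y cY HY where Y: "WD \<Omega> Ys e W \<rho> UY \<xi>Y cY HY" using controls_W_elim h by blast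
    obtain UI \<xi>I cI GI where X: "\<forall>i<length Ys. VFD \<Omega> Xs (fst (Ys!i)) (snd (Ys!i)) (UI i) (\<xi>I i) (cI i) (GI i)"
      using XD h by blast
    show "controls_W \<Omega> Xs e W" by (rule part2[OF ne \<sigma> deg Y X])
  qed
qed

end
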